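(* Let $X$ be a Banach space and $\bar e=(e_j)_{j\in\mathbb N}$ an asymptotic model generated by a normalized weakly null array in $X$. Then for every $k\in\mathbb N$ and $\varepsilon>0$ the metric space $([\mathbb N]^k,d^{(k)}_{\bar e})$ bi-Lipschitzly embeds into $X$ with distortion at most $2+\varepsilon$.
   Context: A normalized weakly null array is a family $(x^{(i)}_j:i,j\in\mathbb N)$ of unit vectors with each row $(x^{(i)}_j)_j$ weakly null. A basic sequence $(e_i)$ is an asymptotic model generated by it if there is a null sequence $(\varepsilon_n)$ in $(0,1)$ with $\big|\|\sum_{i=1}^na_ix^{(i)}_{k_i}\|-\|\sum_{i=1}^na_ie_i\|\big|<\varepsilon_n$ for all $n$, $(a_i)\subset[-1,1]$, $n\le k_1<\dots<k_n$. Such $\bar e$ is normalized and $1$-suppression unconditional. For $\bar m=\{m_1<\dots<m_k\},\bar n=\{n_1<\dots<n_k\}\in[\mathbb N]^k$, $d^{(k)}_{\bar e}(\bar m,\bar n)=\|\sum_{j\in F}e_j\|$ with $F=\{j:m_j\ne n_j\}$. A metric space $M$ bi-Lipschitzly embeds into $X$ with distortion at most $D$ if there are $s>0$ and $f:M\to X$ with $s\,d(x,y)\le\|f(x)-f(y)\|\le sD\,d(x,y)$. *)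

theory Defs
  imports "HOL-Analysis.Analysis"
begin

text \<open>Indexing convention: the paper's \<open>\<nat> = {1,2,...}\<close> is shifted to Isabelle's
  \<open>nat = {0,1,...}\<close>; row \<open>i\<close>, column \<open>j\<close>, basis vector \<open>e j\<close> all start at 0.\<close>

definition weakly_null :: "(nat \<Rightarrow> 'a::real_normed_vector) \<Rightarrow> bool" where
  "weakly_null x \<longleftrightarrow>
     (\<forall>f :: 'a \<Rightarrow> real. bounded_linear f \<longrightarrow> (\<lambda>j. f (x j)) \<longlonglongrightarrow> 0)"

definition normalized_weakly_null_array :: "(nat \<Rightarrow> nat \<Rightarrow> 'a::real_normed_vector) \<Rightarrow> bool" where
  "normalized_weakly_null_array x \<longleftrightarrow>
     (\<forall>i j. norm (x i j) = 1) \<and> (\<forall>i. weakly_null (x i))"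

definition basic_sequence :: "(nat \<Rightarrow> 'b::real_normed_vector) \<Rightarrow> bool" where
  "basic_sequence e \<longleftrightarrow>
     (\<forall>y \<in> closure (span (range e)).
        \<exists>!a :: nat \<Rightarrow> real. (\<lambda>n. \<Sum>i<n. a i *\<^sub>R e i) \<longlonglongrightarrow> y)"

definition asymptotic_model ::
  "(nat \<Rightarrow> 'b::real_normed_vector) \<Rightarrow> (nat \<Rightarrow> nat \<Rightarrow> 'a::real_normed_vector) \<Rightarrow> bool" where
  "asymptotic_model e x \<longleftrightarrow> basic_sequence e \<and>
     (\<exists>\<epsilon> :: nat \<Rightarrow> real. (\<forall>n. 0 < \<epsilon> n \<and> \<epsilon> n < 1) \<and> \<epsilon> \<longlonglongrightarrow> 0 \<and>
        (\<forall>n (a :: nat \<Rightarrow> real) (k :: nat \<Rightarrow> nat).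
           (\<forall>i<n. -1 \<le> a i \<and> a i \<le> 1) \<longrightarrow>
           (0 < n \<longrightarrow> n \<le> k 0) \<longrightarrow>
           (\<forall>i j. i < j \<and> j < n \<longrightarrow> k i < k j) \<longrightarrow>
           \<bar>norm (\<Sum>i<n. a i *\<^sub>R x i (k i)) - norm (\<Sum>i<n. a i *\<^sub>R e i)\<bar> < \<epsilon> n))"

definition ksets :: "nat \<Rightarrow> nat set set" where
  "ksets k = {M. finite M \<and> card M = k}"

definition dk :: "(nat \<Rightarrow> 'b::real_normed_vector) \<Rightarrow> nat \<Rightarrow> nat set \<Rightarrow> nat set \<Rightarrow> real" where
  "dk e k M N = norm (\<Sum>j\<in>{j. j < k \<and> sorted_list_of_set M ! j \<noteq> sorted_list_of_set N ! j}. e j)"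

end

theory Submission
  imports Defs "HOL-Library.Ramsey"
begin
definition pfun :: "('a::real_vector \<Rightarrow> real) \<Rightarrow> ('a \<times> real) set \<Rightarrow> bool" where
  "pfun p G \<longleftrightarrow> (0,0) \<in> G \<and>
     (\<forall>u v u' v'. (u,v) \<in> G \<longrightarrow> (u',v') \<in> G \<longrightarrow> (u+u', v+v') \<in> G) \<and>
     (\<forall>u v t. (u,v) \<in> G \<longrightarrow> (t *\<^sub>R u, t * v) \<in> G) \<and>
     (\<forall>u v v'. (u,v) \<in> G \<longrightarrow> (u,v') \<in> G \<longrightarrow> v = v') \<and>
     (\<forall>u v. (u,v) \<in> G \<longrightarrow> v \<le> p u)"

lemma pfun_0: "pfun p G \<Longrightarrow> (0,0) \<in> G" unfolding pfun_def by blast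
lemma pfun_add: "pfun p G \<Longrightarrow> (u,v) \<in> G \<Longrightarrow> (u',v') \<in> G \<Longrightarrow> (u+u', v+v') \<in> G"
  unfolding pfun_def by blast
lemma pfun_sc: "pfun p G \<Longrightarrow> (u,v) \<in> G \<Longrightarrow> (t *\<^sub>R u, t * v) \<in> G"
  unfolding pfun_def by blast
lemma pfun_fun: "pfun p G \<Longrightarrow> (u,v) \<in> G \<Longrightarrow> (u,v') \<in> G \<Longrightarrow> v = v'"
  unfolding pfun_def by blast
lemma pfun_le: "pfun p G \<Longrightarrow> (u,v) \<in> G \<Longrightarrow> v \<le> p u"
  unfolding pfun_def by blast

lemma pfun_extend:
  fixes p :: "'a::real_vector \<Rightarrow> real"
  assumes sub: "\<And>x y. p (x + y) \<le> p x + p y"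
    and hom: "\<And>x t. 0 < t \<Longrightarrow> p (t *\<^sub>R x) = t * p x"
    and G: "pfun p G" and x0: "x0 \<notin> fst ` G"
  shows "\<exists>G'. pfun p G' \<and> G \<subseteq> G' \<and> G' \<noteq> G"
proof -
  have G0: "(0,0) \<in> G"
    and Gadd: "\<And>u v u' v'. (u,v) \<in> G \<Longrightarrow> (u',v') \<in> G \<Longrightarrow> (u+u', v+v') \<in> G"
    and Gsc: "\<And>u v t. (u,v) \<in> G \<Longrightarrow> (t *\<^sub>R u, t * v) \<in> G"
    and Gfun: "\<And>u v v'. (u,v) \<in> G \<Longrightarrow> (u,v') \<in> G \<Longrightarrow> v = v'"
    and Gp: "\<And>u v. (u,v) \<in> G \<Longrightarrow> v \<le> p u"
    using G unfolding pfun_def by blast+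
  define S where "S = (\<lambda>(u,v). v - p (u - x0)) ` G"
  have Sne: "S \<noteq> {}" using G0 S_def by auto
  have Sbd: "\<And>s u' v'. s \<in> S \<Longrightarrow> (u',v') \<in> G \<Longrightarrow> s \<le> p (u' + x0) - v'"
  proof -
    fix s u' v' assume s: "s \<in> S" and uv': "(u',v') \<in> G"
    then obtain u v where uv: "(u,v) \<in> G" and sv: "s = v - p (u - x0)" unfolding S_def by auto
    have "v + v' \<le> p (u + u')" using Gp[OF Gadd[OF uv uv']] .
    also have "\<dots> = p ((u - x0) + (u' + x0))" by (simp add: algebra_simps)
    also have "\<dots> \<le> p (u - x0) + p (u' + x0)" by (rule sub)
    finally show "s \<le> p (u' + x0) - v'" using sv by simp
  qed
  define c where "c = Sup S"
  have bddS: "bdd_above S" using Sbd[OF _ G0] by (intro bdd_aboveI[where M="p x0"]) simp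
  have c1: "\<And>u v. (u,v) \<in> G \<Longrightarrow> v - p (u - x0) \<le> c"
    unfolding c_def by (rule cSup_upper[OF _ bddS]) (force simp: S_def)
  have c2: "\<And>u v. (u,v) \<in> G \<Longrightarrow> c \<le> p (u + x0) - v"
    unfolding c_def by (rule cSup_least[OF Sne]) (rule Sbd)
  define G' where "G' = (\<lambda>((u,v),t). (u + t *\<^sub>R x0, v + t * c)) ` (G \<times> UNIV)"
  have G'I: "(u + t *\<^sub>R x0, v + t * c) \<in> G'" if "(u,v) \<in> G" for u v t
    unfolding G'_def using that by (intro image_eqI[where x="((u,v),t)"]) auto
  have G'E: "\<exists>u v t. (u,v) \<in> G \<and> w = (u + t *\<^sub>R x0, v + t * c)" if "w \<in> G'" for w
    using that unfolding G'_def by auto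
  have domsub: "\<And>u v u' v'. (u,v) \<in> G \<Longrightarrow> (u',v') \<in> G \<Longrightarrow> \<exists>w. (u - u', w) \<in> G"
  proof -
    fix u v u' v' assume a: "(u,v) \<in> G" "(u',v') \<in> G"
    have "(u + (-1) *\<^sub>R u', v + (-1) * v') \<in> G" by (rule Gadd[OF a(1) Gsc[OF a(2)]])
    then show "\<exists>w. (u - u', w) \<in> G" by auto
  qed
  have uniq: "t = t' \<and> u = u'" if a: "(u,v) \<in> G" "(u',v') \<in> G" and eq: "u + t *\<^sub>R x0 = u' + t' *\<^sub>R x0" for u v u' v' t t'
  proof (cases "t = t'")
    case True then show ?thesis using eq by simp
  next
    case False
    obtain w where w: "(u' - u, w) \<in> G" using domsub[OF a(2) a(1)] by blast
    have "(t - t') *\<^sub>R x0 = u' - u" using eq by (simp add: algebra_simps)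
    then have "(1/(t-t')) *\<^sub>R ((t - t') *\<^sub>R x0) = (1/(t-t')) *\<^sub>R (u' - u)" by simp
    then have "x0 = (1/(t-t')) *\<^sub>R (u' - u)" using False by simp
    then have "(x0, (1/(t-t')) * w) \<in> G" using Gsc[OF w, of "1/(t-t')"] by simp
    then have "x0 \<in> fst ` G" by force
    then show ?thesis using x0 by blast
  qed
  have "pfun p G'"
    unfolding pfun_def
  proof (intro conjI allI impI)
    show "(0,0) \<in> G'" using G'I[OF G0, of 0] by simp
  next
    fix u v u' v' assume "(u,v) \<in> G'" "(u',v') \<in> G'"
    then obtain a b t a' b' t' where "(a,b) \<in> G" "(a',b') \<in> G" and
      "u = a + t *\<^sub>R x0" "v = b + t * c" "u' = a' + t' *\<^sub>R x0" "v' = b' + t' * c"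
      by (metis G'E prod.inject)
    then have "(a+a', b+b') \<in> G" "u+u' = (a+a') + (t+t') *\<^sub>R x0" "v+v' = (b+b') + (t+t') * c"
      by (simp_all add: Gadd scaleR_add_left distrib_right)
    then show "(u+u', v+v') \<in> G'" by (metis G'I)
  next
    fix u v t assume "(u,v) \<in> G'"
    then obtain a b q where "(a,b) \<in> G" "u = a + q *\<^sub>R x0" "v = b + q * c"
      by (metis G'E prod.inject)
    then have "(t *\<^sub>R a, t * b) \<in> G" "t *\<^sub>R u = t *\<^sub>R a + (t * q) *\<^sub>R x0" "t * v = t * b + (t * q) * c"
      by (simp_all add: Gsc scaleR_add_right distrib_left)
    then show "(t *\<^sub>R u, t * v) \<in> G'" by (metis G'I)
  next
    fix u v v' assume "(u,v) \<in> G'" "(u,v') \<in> G'"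
    then obtain a b s a' b' s' where ab: "(a,b) \<in> G" "(a',b') \<in> G" and
      "u = a + s *\<^sub>R x0" "v = b + s * c" "u = a' + s' *\<^sub>R x0" "v' = b' + s' * c"
      by (metis G'E prod.inject)
    note eqs = this
    have "a + s *\<^sub>R x0 = a' + s' *\<^sub>R x0" using eqs(3,5) by simp
    then have ss: "s = s' \<and> a = a'" by (rule uniq[OF ab])
    then have "b = b'" using Gfun[of a b b'] ab by simp
    then show "v = v'" using eqs(4,6) ss by simp
  next
    fix u v assume "(u,v) \<in> G'"
    then obtain a b t where ab: "(a,b) \<in> G" and uv: "u = a + t *\<^sub>R x0" "v = b + t * c"
      by (metis G'E prod.inject)
    consider "t = 0" | "t > 0" | "t < 0" by linarith
    then show "v \<le> p u"
    proof cases
      case 1 then show ?thesis using Gp[OF ab] uv by simp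
    next
      case 2
      have ab': "((1/t) *\<^sub>R a, (1/t) * b) \<in> G" by (rule Gsc[OF ab])
      have "c \<le> p ((1/t) *\<^sub>R a + x0) - (1/t) * b" by (rule c2[OF ab'])
      then have "t * c \<le> t * (p ((1/t) *\<^sub>R a + x0) - (1/t) * b)" using 2 by (simp add: mult_left_mono)
      then have "t * c \<le> t * p ((1/t) *\<^sub>R a + x0) - b" using 2 by (simp add: right_diff_distrib)
      also have "t * p ((1/t) *\<^sub>R a + x0) = p (t *\<^sub>R ((1/t) *\<^sub>R a + x0))" using hom[OF 2] by simp
      also have "t *\<^sub>R ((1/t) *\<^sub>R a + x0) = a + t *\<^sub>R x0" using 2 by (simp add: algebra_simps)
      finally show ?thesis using uv by simp
    next
      case 3
      define s where "s = - t"
      have s: "s > 0" using 3 s_def by simp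
      have ab': "((1/s) *\<^sub>R a, (1/s) * b) \<in> G" by (rule Gsc[OF ab])
      have "(1/s) * b - p ((1/s) *\<^sub>R a - x0) \<le> c" by (rule c1[OF ab'])
      then have "s * ((1/s) * b - p ((1/s) *\<^sub>R a - x0)) \<le> s * c" using s by (simp add: mult_left_mono)
      then have "b - s * c \<le> s * p ((1/s) *\<^sub>R a - x0)" using s by (simp add: right_diff_distrib)
      also have "s * p ((1/s) *\<^sub>R a - x0) = p (s *\<^sub>R ((1/s) *\<^sub>R a - x0))" using hom[OF s] by simp
      also have "s *\<^sub>R ((1/s) *\<^sub>R a - x0) = a + t *\<^sub>R x0" using s by (simp add: algebra_simps s_def)
      finally show ?thesis using uv s_def by simp
    qed
  qed
  note P1 = this
  have P2: "G \<subseteq> G'"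
  proof
    fix z assume z: "z \<in> G"
    obtain u v where "z = (u,v)" by fastforce
    then have "z = (u + 0 *\<^sub>R x0, v + 0 * c)" by simp
    then show "z \<in> G'" using G'I[of u v 0] z \<open>z = (u,v)\<close> by simp
  qed
  have P3: "G' \<noteq> G"
  proof -
    have "(0 + 1 *\<^sub>R x0, 0 + 1 * c) \<in> G'" using G'I[OF G0] by blast
    then have "(x0, c) \<in> G'" by simp
    then show ?thesis using x0 by (metis fst_conv image_eqI)
  qed
  show ?thesis using P1 P2 P3 by blast
qed

lemma hahn_banach_sublinear:
  fixes p :: "'a::real_vector \<Rightarrow> real"
  assumes sub: "\<And>x y. p (x + y) \<le> p x + p y"
    and hom: "\<And>x t. 0 < t \<Longrightarrow> p (t *\<^sub>R x) = t * p x"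
  shows "\<exists>g. linear g \<and> (\<forall>x. g x \<le> p x)"
proof -
  have p0: "p 0 = 0" using hom[of 2 0] by simp
  define A where "A = {G. pfun p G}"
  have "\<forall>C\<in>chains A. \<exists>U\<in>A. \<forall>X\<in>C. X \<subseteq> U"
  proof
    fix C assume C: "C \<in> chains A"
    then have CA: "C \<subseteq> A" and ch: "\<And>X Y. X \<in> C \<Longrightarrow> Y \<in> C \<Longrightarrow> X \<subseteq> Y \<or> Y \<subseteq> X"
      unfolding chains_def chain_subset_def by blast+
    show "\<exists>U\<in>A. \<forall>X\<in>C. X \<subseteq> U"
    proof (cases "C = {}")
      case True
      have "pfun p {(0,0)}" unfolding pfun_def using p0 by simp
      then show ?thesis using True A_def by blast
    next
      case False
      have P: "\<And>X. X \<in> C \<Longrightarrow> pfun p X" using CA A_def by blast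
      have "pfun p (\<Union>C)" unfolding pfun_def
      proof (intro conjI allI impI)
        show "(0,0) \<in> \<Union>C" using False P pfun_0 by blast
      next
        fix u v u' v' assume "(u,v) \<in> \<Union>C" "(u',v') \<in> \<Union>C"
        then obtain X X' where XX: "X \<in> C" "X' \<in> C" "(u,v) \<in> X" "(u',v') \<in> X'" by blast
        show "(u+u', v+v') \<in> \<Union>C"
        proof (cases "X \<subseteq> X'")
          case True then show ?thesis using XX P[of X'] pfun_add[of p X' u v u' v'] by blast
        next
          case False then have "X' \<subseteq> X" using ch[OF XX(1,2)] by blast
          then show ?thesis using XX P[of X] pfun_add[of p X u v u' v'] by blast
        qed
      next
        fix u v t assume "(u,v) \<in> \<Union>C"
        then show "(t *\<^sub>R u, t * v) \<in> \<Union>C" using P pfun_sc by blast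
      next
        fix u v v' assume "(u,v) \<in> \<Union>C" "(u,v') \<in> \<Union>C"
        then obtain X X' where XX: "X \<in> C" "X' \<in> C" "(u,v) \<in> X" "(u,v') \<in> X'" by blast
        show "v = v'"
        proof (cases "X \<subseteq> X'")
          case True then show ?thesis using XX P[of X'] pfun_fun[of p X' u v v'] by blast
        next
          case False then have "X' \<subseteq> X" using ch[OF XX(1,2)] by blast
          then show ?thesis using XX P[of X] pfun_fun[of p X u v v'] by blast
        qed
      next
        fix u v assume "(u,v) \<in> \<Union>C"
        then show "v \<le> p u" using P pfun_le by blast
      qed
      then show ?thesis using A_def by blast
    qed
  qed
  from Zorn_Lemma2[OF this] obtain M where MA: "M \<in> A" and max: "\<And>X. X \<in> A \<Longrightarrow> M \<subseteq> X \<Longrightarrow> X = M"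
    by blast
  have PM: "pfun p M" using MA A_def by blast
  have dom: "\<And>x. \<exists>v. (x,v) \<in> M"
  proof (rule ccontr)
    fix x assume "\<not> (\<exists>v. (x,v) \<in> M)"
    then have "x \<notin> fst ` M" by force
    from pfun_extend[OF sub hom PM this] obtain G' where "pfun p G'" "M \<subseteq> G'" "G' \<noteq> M" by blast
    then show False using max A_def by blast
  qed
  have Mfun: "\<And>u v v'. (u,v) \<in> M \<Longrightarrow> (u,v') \<in> M \<Longrightarrow> v = v'" using PM pfun_fun by metis
  define g where "g x = (THE v. (x,v) \<in> M)" for x
  have gM: "(x, g x) \<in> M" for x
    unfolding g_def using dom[of x] Mfun by (metis theI)
  have geq: "(x, v) \<in> M \<Longrightarrow> g x = v" for x v using gM Mfun by blast
  have "linear g"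
  proof (rule linearI)
    fix a b show "g (a + b) = g a + g b"
      using pfun_add[OF PM gM[of a] gM[of b]] by (rule geq)
  next
    fix r b show "g (r *\<^sub>R b) = r *\<^sub>R g b"
      using pfun_sc[OF PM gM[of b], of r] geq by simp
  qed
  moreover have "\<forall>x. g x \<le> p x" using PM gM pfun_le by blast
  ultimately show ?thesis by blast
qed

lemma mazur:
  fixes y :: "nat \<Rightarrow> 'a::real_normed_vector"
  assumes wn: "\<And>g :: 'a \<Rightarrow> real. bounded_linear g \<Longrightarrow> (\<lambda>n. g (y n)) \<longlonglongrightarrow> 0"
    and Y: "infinite Y" and dpos: "\<delta> > 0"
  shows "\<exists>c \<in> convex hull (y ` Y). norm c < \<delta>"
proof (rule ccontr)
  define C where "C = convex hull (y ` Y)"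
  assume "\<not> ?thesis"
  then have big: "\<And>c. c \<in> C \<Longrightarrow> \<delta> \<le> norm c" unfolding C_def by force
  obtain l0 where "l0 \<in> Y" using Y infinite_imp_nonempty by blast
  then have c0: "y l0 \<in> C" unfolding C_def by (simp add: hull_inc)
  have cvx: "convex C" unfolding C_def by (rule convex_convex_hull)
  define Q where "Q z = (\<lambda>(t,c). norm (z + t *\<^sub>R c) - t * \<delta>) ` ({0..} \<times> C)" for z
  have Qel: "\<exists>t c. t \<ge> 0 \<and> c \<in> C \<and> q = norm (z + t *\<^sub>R c) - t * \<delta>" if "q \<in> Q z" for q z
  proof -
    from that obtain pr where pr: "pr \<in> {0..} \<times> C" "q = (\<lambda>(t,c). norm (z + t *\<^sub>R c) - t * \<delta>) pr"
      unfolding Q_def by (rule imageE)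
    obtain t c where "pr = (t,c)" by fastforce
    then show ?thesis using pr by auto
  qed
  define p where "p z = Inf (Q z)" for z
  have Qlow: "- norm z \<le> q" if qz: "q \<in> Q z" for q z
  proof -
    obtain t c where tc: "t \<ge> 0" "c \<in> C" "q = norm (z + t *\<^sub>R c) - t * \<delta>" using Qel[OF qz] by blast
    have a1: "t * \<delta> \<le> t * norm c" by (rule mult_left_mono[OF big[OF tc(2)] tc(1)])
    have a2: "t * norm c = norm (t *\<^sub>R c)" using tc(1) by simp
    have a3: "norm (t *\<^sub>R c) \<le> norm (z + t *\<^sub>R c) + norm z"
      using norm_triangle_ineq4[of "z + t *\<^sub>R c" z] by simp
    show ?thesis using a1 a2 a3 tc(3) by linarith
  qed
  have Qin: "norm (z + t *\<^sub>R c) - t * \<delta> \<in> Q z" if "t \<ge> 0" "c \<in> C" for z t c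
    unfolding Q_def using that by (intro image_eqI[where x="(t,c)"]) auto
  have bdd: "bdd_below (Q z)" for z using Qlow by (intro bdd_belowI[where m="- norm z"]) auto
  have Qne: "Q z \<noteq> {}" for z using Qin[OF _ c0, of 0] by blast
  have ple: "p z \<le> q" if "q \<in> Q z" for z q unfolding p_def by (rule cInf_lower[OF that bdd])
  have pnorm: "p z \<le> norm z" for z using ple[OF Qin[OF _ c0, of 0 z]] by simp
  have pneg: "p (- c) \<le> - \<delta>" if "c \<in> C" for c using ple[OF Qin[OF _ that, of 1 "- c"]] by simp
  have sub: "p (a + b) \<le> p a + p b" for a b
  proof -
    have key: "p (a + b) \<le> q1 + q2" if q1: "q1 \<in> Q a" and q2: "q2 \<in> Q b" for q1 q2
    proof -
      obtain t1 c1 where tc1: "t1 \<ge> 0" "c1 \<in> C" "q1 = norm (a + t1 *\<^sub>R c1) - t1 * \<delta>" using Qel[OF q1] by blast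
      obtain t2 c2 where tc2: "t2 \<ge> 0" "c2 \<in> C" "q2 = norm (b + t2 *\<^sub>R c2) - t2 * \<delta>" using Qel[OF q2] by blast
      show ?thesis
      proof (cases "t1 + t2 = 0")
        case True
        then have "t1 = 0" "t2 = 0" using tc1 tc2 by auto
        then have "norm (a + b + 0 *\<^sub>R c1) - 0 * \<delta> \<le> q1 + q2" using tc1 tc2 by (simp add: norm_triangle_ineq)
        then show ?thesis using ple[OF Qin[OF _ tc1(2), of 0 "a+b"]] by simp
      next
        case False
        then have tp: "t1 + t2 > 0" using tc1 tc2 by auto
        define c where "c = (t1 / (t1 + t2)) *\<^sub>R c1 + (t2 / (t1 + t2)) *\<^sub>R c2"
        have cC: "c \<in> C" unfolding c_def using cvx tc1 tc2 tp
          by (intro convexD) (auto simp: add_divide_distrib[symmetric])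
        have tc: "(t1 + t2) *\<^sub>R c = t1 *\<^sub>R c1 + t2 *\<^sub>R c2" unfolding c_def using tp
          by (simp add: scaleR_add_right)
        have "norm (a + b + (t1 + t2) *\<^sub>R c) - (t1 + t2) * \<delta> \<le> q1 + q2"
          unfolding tc tc1(3) tc2(3)
          using norm_triangle_ineq[of "a + t1 *\<^sub>R c1" "b + t2 *\<^sub>R c2"]
          by (simp add: algebra_simps)
        then show ?thesis using ple[OF Qin[OF _ cC, of "t1 + t2" "a+b"]] tp by simp
      qed
    qed
    have "p (a + b) - q1 \<le> p b" if "q1 \<in> Q a" for q1
    proof -
      have *: "p (a + b) - q1 \<le> q2" if "q2 \<in> Q b" for q2
        using key[OF \<open>q1 \<in> Q a\<close> that] by linarith
      show ?thesis unfolding p_def[of b] by (rule cInf_greatest[OF Qne]) (rule *)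
    qed
    then have **: "p (a + b) - p b \<le> q1" if "q1 \<in> Q a" for q1
      using that by fastforce
    have "p (a + b) - p b \<le> p a"
      unfolding p_def[of a] by (rule cInf_greatest[OF Qne]) (rule **)
    then show ?thesis by simp
  qed
  have homle: "p (t *\<^sub>R z) \<le> t * p z" if tp: "t > 0" for t z
  proof -
    have "p (t *\<^sub>R z) / t \<le> q" if q: "q \<in> Q z" for q
    proof -
      obtain s c where sc: "s \<ge> 0" "c \<in> C" "q = norm (z + s *\<^sub>R c) - s * \<delta>" using Qel[OF q] by blast
      have "norm (t *\<^sub>R z + (t * s) *\<^sub>R c) - (t * s) * \<delta> = t * q"
      proof -
        have "t *\<^sub>R z + (t * s) *\<^sub>R c = t *\<^sub>R (z + s *\<^sub>R c)" by (simp add: scaleR_add_right)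
        then have e1: "norm (t *\<^sub>R z + (t * s) *\<^sub>R c) = t * norm (z + s *\<^sub>R c)" using tp by simp
        have e2: "norm (z + s *\<^sub>R c) = q + s * \<delta>" using sc(3) by simp
        show ?thesis unfolding e1 e2 by (simp add: algebra_simps)
      qed
      then have "p (t *\<^sub>R z) \<le> t * q" using ple[OF Qin[OF _ sc(2), of "t * s" "t *\<^sub>R z"]] tp sc(1) by simp
      then show ?thesis using tp by (simp add: divide_le_eq mult.commute)
    qed
    then have "p (t *\<^sub>R z) / t \<le> p z" unfolding p_def[of z] using Qne by (intro cInf_greatest) auto
    then show ?thesis using tp by (simp add: divide_le_eq mult.commute)
  qed
  have hom: "p (t *\<^sub>R z) = t * p z" if tp: "t > 0" for t z
  proof -
    have "p z = p ((1/t) *\<^sub>R (t *\<^sub>R z))" using tp by simp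
    also have "\<dots> \<le> (1/t) * p (t *\<^sub>R z)" using homle[of "1/t" "t *\<^sub>R z"] tp by simp
    finally have "t * p z \<le> p (t *\<^sub>R z)" using tp by (simp add: field_simps)
    then show ?thesis using homle[OF tp, of z] by linarith
  qed
  obtain g where lin: "linear g" and gp: "\<And>x. g x \<le> p x"
    using hahn_banach_sublinear[of p] sub hom by blast
  have gadd: "g (a + b) = g a + g b" for a b using lin by (simp add: linear_add)
  have gsc: "g (r *\<^sub>R a) = r *\<^sub>R g a" for r a using lin by (simp add: linear_scale)
  have gneg: "g (- a) = - g a" for a using gsc[of "-1" a] by simp
  have "bounded_linear g"
  proof (rule bounded_linear_intro[where K=1])
    fix a show "norm (g a) \<le> norm a * 1"
      using gp[of a] pnorm[of a] gp[of "- a"] pnorm[of "- a"] gneg[of a] by auto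
  qed (auto simp: gadd gsc)
  then have lim: "(\<lambda>n. g (y n)) \<longlonglongrightarrow> 0" by (rule wn)
  have ge: "\<delta> \<le> g (y l)" if "l \<in> Y" for l
  proof -
    have "y l \<in> C" unfolding C_def using that by (simp add: hull_inc)
    then have "g (- y l) \<le> - \<delta>" using gp pneg by (meson order_trans)
    then show ?thesis using gneg by simp
  qed
  from lim dpos have "eventually (\<lambda>n. dist (g (y n)) 0 < \<delta>) sequentially" by (rule tendstoD)
  then obtain N where N: "\<And>n. n \<ge> N \<Longrightarrow> \<bar>g (y n)\<bar> < \<delta>" unfolding eventually_sequentially by auto
  obtain l where "l \<in> Y" "l \<ge> N" using Y by (meson infinite_nat_iff_unbounded_le)
  then show False using N ge by fastforce
qed

lemma mazur_idx:
  fixes y :: "nat \<Rightarrow> 'a::real_normed_vector"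
  assumes wn: "\<And>g :: 'a \<Rightarrow> real. bounded_linear g \<Longrightarrow> (\<lambda>n. g (y n)) \<longlonglongrightarrow> 0"
    and Y: "infinite Y" and dpos: "\<delta> > 0"
  shows "\<exists>L lam. finite L \<and> L \<noteq> {} \<and> L \<subseteq> Y \<and> (\<forall>l\<in>L. 0 \<le> lam l) \<and> sum lam L = 1 \<and>
            norm (\<Sum>l\<in>L. lam l *\<^sub>R y l) < \<delta>"
proof -
  have "\<exists>c \<in> convex hull (y ` Y). norm c < \<delta>" by (rule mazur[OF _ Y dpos]) (rule wn)
  then obtain c where c: "c \<in> convex hull (y ` Y)" "norm c < \<delta>" by blast
  then have "\<exists>S u. finite S \<and> S \<subseteq> y ` Y \<and> (\<forall>x\<in>S. 0 \<le> u x) \<and> sum u S = 1 \<and> (\<Sum>v\<in>S. u v *\<^sub>R v) = c"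
    unfolding convex_hull_explicit by simp
  then obtain S u where S0: "finite S \<and> S \<subseteq> y ` Y \<and> (\<forall>x\<in>S. 0 \<le> u x) \<and> sum u S = 1 \<and> (\<Sum>v\<in>S. u v *\<^sub>R v) = c"
    by (elim exE)
  then have S: "finite S" "S \<subseteq> y ` Y" "\<forall>x\<in>S. 0 \<le> u x" "sum u S = 1" "(\<Sum>v\<in>S. u v *\<^sub>R v) = c"
    by simp_all
  define h where "h v = (SOME l. l \<in> Y \<and> y l = v)" for v
  have h: "h v \<in> Y \<and> y (h v) = v" if vS: "v \<in> S" for v
  proof -
    obtain l where "l \<in> Y" "y l = v" using S(2) vS by blast
    then show ?thesis unfolding h_def by (metis (mono_tags, lifting) someI)
  qed
  have inj: "inj_on h S" by (rule inj_onI) (metis h)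
  define L where "L = h ` S"
  define lam where "lam l = u (y l)" for l
  have "(\<Sum>l\<in>L. lam l *\<^sub>R y l) = (\<Sum>v\<in>S. lam (h v) *\<^sub>R y (h v))"
    unfolding L_def by (rule sum.reindex[OF inj, unfolded comp_def])
  also have "\<dots> = (\<Sum>v\<in>S. u v *\<^sub>R v)" unfolding lam_def by (rule sum.cong) (auto simp: h)
  finally have e1: "(\<Sum>l\<in>L. lam l *\<^sub>R y l) = c" using S(5) by simp
  have "sum lam L = (\<Sum>v\<in>S. lam (h v))" unfolding L_def by (rule sum.reindex[OF inj, unfolded comp_def])
  also have "\<dots> = sum u S" unfolding lam_def by (rule sum.cong) (auto simp: h)
  finally have e2: "sum lam L = 1" using S(4) by simp
  have "S \<noteq> {}" using S(4) by auto
  then have "L \<noteq> {}" unfolding L_def by simp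
  moreover have "L \<subseteq> Y" unfolding L_def using h by auto
  moreover have "\<forall>l\<in>L. 0 \<le> lam l" unfolding L_def lam_def using h S(3) by auto
  ultimately show ?thesis using e1 e2 c(2) S(1) L_def by blast
qed

lemma am_bound:
  fixes x :: "nat \<Rightarrow> nat \<Rightarrow> 'a::real_normed_vector" and e :: "nat \<Rightarrow> 'b::real_normed_vector"
  assumes model: "\<forall>n (a::nat\<Rightarrow>real) (kk::nat\<Rightarrow>nat). (\<forall>i<n. -1 \<le> a i \<and> a i \<le> 1) \<longrightarrow>
           (0 < n \<longrightarrow> n \<le> kk 0) \<longrightarrow> (\<forall>i j. i < j \<and> j < n \<longrightarrow> kk i < kk j) \<longrightarrow>
           \<bar>norm (\<Sum>i<n. a i *\<^sub>R x i (kk i)) - norm (\<Sum>i<n. a i *\<^sub>R e i)\<bar> < ep n"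
    and F: "F \<subseteq> {..<n}" and s1: "\<forall>j\<in>F. n + j \<le> s j"
    and s2: "\<forall>j\<in>F. \<forall>j'\<in>F. j < j' \<longrightarrow> s j + (j' - j) \<le> s j'"
  shows "\<bar>norm (\<Sum>j\<in>F. x j (s j)) - norm (\<Sum>j\<in>F. e j)\<bar> < ep n"
proof -
  define a :: "nat \<Rightarrow> real" where "a i = (if i \<in> F then 1 else 0)" for i
  define SS where "SS i = insert (n + i) ((\<lambda>j. s j + (i - j)) ` {j\<in>F. j \<le> i})" for i
  define kk where "kk i = Max (SS i)" for i
  have finF: "finite F" using F finite_subset by blast
  have finS: "finite (SS i)" for i unfolding SS_def using finF by simp
  have kkin: "kk i \<in> SS i" for i unfolding kk_def by (rule Max_in[OF finS]) (simp add: SS_def)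
  have kkge: "m \<le> kk i" if "m \<in> SS i" for m i unfolding kk_def by (rule Max_ge[OF finS that])
  have shift: "m + (i' - i) \<in> SS i'" if "m \<in> SS i" "i \<le> i'" for m i i'
  proof -
    from that(1) consider "m = n + i" | j where "j \<in> F" "j \<le> i" "m = s j + (i - j)"
      unfolding SS_def by blast
    then show ?thesis
    proof cases
      case 1 then show ?thesis using that(2) unfolding SS_def by simp
    next
      case 2
      then have "m + (i' - i) = s j + (i' - j)" using that(2) by simp
      then show ?thesis using 2 that(2) unfolding SS_def by auto
    qed
  qed
  have mono: "kk i < kk j" if "i < j" for i j
  proof -
    have "kk i + (j - i) \<in> SS j" using shift[OF kkin[of i]] that by simp
    then have "kk i + (j - i) \<le> kk j" by (rule kkge)
    then show ?thesis using that by simp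
  qed
  have kk0: "n \<le> kk 0" using kkge[of "n + 0" 0] unfolding SS_def by simp
  have kkF: "kk j = s j" if "j \<in> F" for j
  proof -
    have "s j \<in> SS j" unfolding SS_def using that by (auto intro!: image_eqI[where x=j])
    moreover have "m \<le> s j" if "m \<in> SS j" for m
    proof -
      from that consider "m = n + j" | j' where "j' \<in> F" "j' \<le> j" "m = s j' + (j - j')"
        unfolding SS_def by blast
      then show ?thesis
      proof cases
        case 1 then show ?thesis using s1 \<open>j \<in> F\<close> by simp
      next
        case 2
        show ?thesis
        proof (cases "j' = j")
          case True then show ?thesis using 2 by simp
        next
          case False then show ?thesis using 2 s2 \<open>j \<in> F\<close> by auto
        qed
      qed
    qed
    ultimately show ?thesis unfolding kk_def by (intro Max_eqI[OF finS]) auto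
  qed
  have "\<bar>norm (\<Sum>i<n. a i *\<^sub>R x i (kk i)) - norm (\<Sum>i<n. a i *\<^sub>R e i)\<bar> < ep n"
    using model kk0 mono unfolding a_def by auto
  moreover have "(\<Sum>i<n. a i *\<^sub>R x i (kk i)) = (\<Sum>j\<in>F. x j (s j))"
    by (rule sum.mono_neutral_cong_right) (use F kkF in \<open>auto simp: a_def\<close>)
  moreover have "(\<Sum>i<n. a i *\<^sub>R e i) = (\<Sum>j\<in>F. e j)"
    by (rule sum.mono_neutral_cong_right) (use F in \<open>auto simp: a_def\<close>)
  ultimately show ?thesis by simp
qed

lemma basic_sum_nonzero:
  fixes e :: "nat \<Rightarrow> 'b::real_normed_vector"
  assumes b: "basic_sequence e" and F: "finite F" "F \<noteq> {}"
  shows "(\<Sum>j\<in>F. e j) \<noteq> 0"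
proof
  assume z: "(\<Sum>j\<in>F. e j) = 0"
  have "(0::'b) \<in> closure (span (range e))" by (simp add: span_zero closure_subset[THEN subsetD])
  then have ex1: "\<exists>!a :: nat \<Rightarrow> real. (\<lambda>n. \<Sum>i<n. a i *\<^sub>R e i) \<longlonglongrightarrow> 0"
    using b unfolding basic_sequence_def by blast
  define a :: "nat \<Rightarrow> real" where "a i = (if i \<in> F then 1 else 0)" for i
  have l1: "(\<lambda>n. \<Sum>i<n. (0::real) *\<^sub>R e i) \<longlonglongrightarrow> 0" by simp
  have ev: "eventually (\<lambda>n. (\<Sum>i<n. a i *\<^sub>R e i) = 0) sequentially"
  proof (rule eventually_sequentiallyI[where c="Suc (Max F)"])
    fix n assume n: "Suc (Max F) \<le> n"
    have sub: "F \<subseteq> {..<n}" using n Max_ge[OF F(1)] by fastforce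
    have "(\<Sum>i<n. a i *\<^sub>R e i) = (\<Sum>j\<in>F. e j)"
      by (rule sum.mono_neutral_cong_right) (use sub in \<open>auto simp: a_def\<close>)
    then show "(\<Sum>i<n. a i *\<^sub>R e i) = 0" using z by simp
  qed
  have l2: "(\<lambda>n. \<Sum>i<n. a i *\<^sub>R e i) \<longlonglongrightarrow> 0"
    by (rule tendsto_eventually) (rule ev)
  have t1: "(THE b. (\<lambda>n. \<Sum>i<n. b i *\<^sub>R e i) \<longlonglongrightarrow> 0) = a" by (rule the1_equality[where P="\<lambda>b. (\<lambda>n. \<Sum>i<n. b i *\<^sub>R e i) \<longlonglongrightarrow> 0", OF ex1 l2])
  have t2: "(THE b. (\<lambda>n. \<Sum>i<n. b i *\<^sub>R e i) \<longlonglongrightarrow> 0) = (\<lambda>_. 0)" by (rule the1_equality[where P="\<lambda>b. (\<lambda>n. \<Sum>i<n. b i *\<^sub>R e i) \<longlonglongrightarrow> 0", OF ex1]) simp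
  have "a = (\<lambda>_. 0)" using t1 t2 by simp
  moreover obtain j where "j \<in> F" using F by blast
  ultimately show False using fun_cong[of a "\<lambda>_. 0" j] unfolding a_def by simp
qed

lemma ramsey_multi:
  fixes col :: "'l \<Rightarrow> nat set \<Rightarrow> nat" and sz :: "'l \<Rightarrow> nat"
  assumes "finite Lab"
  shows "\<And>Z. infinite Z \<Longrightarrow> (\<forall>l\<in>Lab. \<forall>X. X \<subseteq> Z \<and> finite X \<and> card X = sz l \<longrightarrow> col l X < bnd) \<Longrightarrow>
     \<exists>Y\<subseteq>Z. infinite Y \<and> (\<forall>l\<in>Lab. \<exists>c. \<forall>X. X \<subseteq> Y \<and> finite X \<and> card X = sz l \<longrightarrow> col l X = c)"
  using assms
proof (induction Lab rule: finite_induct)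
  case empty then show ?case by blast
next
  case (insert l0 Lab)
  obtain Y1 c where Y1: "Y1 \<subseteq> Z" "infinite Y1" "\<forall>X. X \<subseteq> Y1 \<and> finite X \<and> card X = sz l0 \<longrightarrow> col l0 X = c"
    using Ramsey[of Z "sz l0" "col l0" bnd] insert.prems by blast
  have lab1: "\<forall>l\<in>Lab. \<forall>X. X \<subseteq> Y1 \<and> finite X \<and> card X = sz l \<longrightarrow> col l X < bnd"
    using insert.prems(2) Y1(1) by blast
  have exY: "\<exists>Y\<subseteq>Y1. infinite Y \<and> (\<forall>l\<in>Lab. \<exists>c. \<forall>X. X \<subseteq> Y \<and> finite X \<and> card X = sz l \<longrightarrow> col l X = c)"
    by (rule insert.IH[OF Y1(2) lab1])
  then obtain Y where Y0: "Y \<subseteq> Y1 \<and> infinite Y \<and> (\<forall>l\<in>Lab. \<exists>c. \<forall>X. X \<subseteq> Y \<and> finite X \<and> card X = sz l \<longrightarrow> col l X = c)"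
    by (elim exE)
  note Y = conjunct1[OF Y0] conjunct1[OF conjunct2[OF Y0]] conjunct2[OF conjunct2[OF Y0]]
  have "\<exists>c. \<forall>X. X \<subseteq> Y \<and> finite X \<and> card X = sz l0 \<longrightarrow> col l0 X = c"
    using Y1(3) Y(1) by (meson order_trans)
  then have "\<forall>l\<in>insert l0 Lab. \<exists>c. \<forall>X. X \<subseteq> Y \<and> finite X \<and> card X = sz l \<longrightarrow> col l X = c"
    using Y(3) by (simp only: ball_simps(7))
  moreover have "Y \<subseteq> Z" using Y(1) Y1(1) by (rule order_trans)
  ultimately show ?case using Y(2) by blast
qed

lemma floor_close0:
  fixes u v :: real
  assumes "\<lfloor>u\<rfloor> = \<lfloor>v\<rfloor>"
  shows "\<bar>u - v\<bar> < 1"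
proof -
  define z where "z = real_of_int \<lfloor>u\<rfloor>"
  have h1: "z \<le> u" "u < z + 1" using floor_correct[of u] unfolding z_def by simp_all
  have h2: "z \<le> v" "v < z + 1" using floor_correct[of v] unfolding z_def assms by simp_all
  have "u - v < 1" using h1(2) h2(1) by simp
  moreover have "v - u < 1" using h1(1) h2(2) by simp
  ultimately show ?thesis by (simp add: abs_less_iff)
qed

lemma floor_close:
  fixes a b \<eta> :: real
  assumes "0 \<le> a" "0 \<le> b" "\<eta> > 0" "nat \<lfloor>a / \<eta>\<rfloor> = nat \<lfloor>b / \<eta>\<rfloor>"
  shows "\<bar>a - b\<bar> < \<eta>"
proof -
  have "\<lfloor>a / \<eta>\<rfloor> = \<lfloor>b / \<eta>\<rfloor>" using assms by (simp add: nat_eq_iff2)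
  then have "\<bar>a / \<eta> - b / \<eta>\<bar> < 1" by (rule floor_close0)
  moreover have "a / \<eta> - b / \<eta> = (a - b) / \<eta>" by (rule diff_divide_distrib[symmetric])
  ultimately have "\<bar>(a - b) / \<eta>\<bar> < 1" by (simp only:)
  moreover have "\<bar>a - b\<bar> / \<eta> = \<bar>(a - b) / \<eta>\<bar>" by (rule abs_div_pos[OF assms(3)])
  ultimately have "\<bar>a - b\<bar> / \<eta> < 1" by (simp only:)
  then show ?thesis using pos_divide_less_eq[OF assms(3)] by simp
qed

lemma sorted_image_upt:
  fixes t :: "nat \<Rightarrow> nat"
  assumes "\<And>i j. i < j \<Longrightarrow> j < r \<Longrightarrow> t i < t j"
  shows "sorted_list_of_set (t ` {..<r}) = map t [0..<r]" and "card (t ` {..<r}) = r"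
proof -
  have inj: "inj_on t {..<r}" by (rule inj_onI) (metis assms lessThan_iff nat_neq_iff)
  then show c: "card (t ` {..<r}) = r" by (simp add: card_image)
  have "sorted_wrt (<) (map t [0..<r])" unfolding sorted_wrt_iff_nth_less using assms by auto
  moreover have "set (map t [0..<r]) = t ` {..<r}" by auto
  moreover have "length (map t [0..<r]) = card (t ` {..<r})" using c by simp
  ultimately show "sorted_list_of_set (t ` {..<r}) = map t [0..<r]"
    using sorted_list_of_set_unique[of "t ` {..<r}"] by blast
qed

lemma sl_less:
  fixes A :: "nat set"
  assumes "finite A" "i < j" "j < card A"
  shows "sorted_list_of_set A ! i < sorted_list_of_set A ! j"
  using sorted_wrt_nth_less[OF strict_sorted_list_of_set[of A]] assms by simp

lemma avg_bound:
  fixes V :: "nat \<Rightarrow> nat \<Rightarrow> 'a::real_normed_vector"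
  assumes L: "\<And>i. i < r \<Longrightarrow> finite (Ls i) \<and> (\<forall>l\<in>Ls i. 0 \<le> lam i l) \<and> sum (lam i) (Ls i) = 1"
    and B: "\<And>ch. (\<forall>i<r. ch i \<in> Ls i) \<Longrightarrow> norm (\<Sum>i<r. V i (ch i)) \<le> B"
    and ch0: "\<forall>i<r. ch0 i \<in> Ls i"
  shows "norm (\<Sum>i<r. \<Sum>l\<in>Ls i. lam i l *\<^sub>R V i l) \<le> B"
proof -
  define avg where "avg i = (\<Sum>l\<in>Ls i. lam i l *\<^sub>R V i l)" for i
  define TT where "TT S ch i = (if i \<in> S then avg i else V i (ch i))" for S ch i
  have claim: "\<forall>ch. (\<forall>i<r. ch i \<in> Ls i) \<longrightarrow> norm (\<Sum>i<r. TT S ch i) \<le> B" if "S \<subseteq> {..<r}" for S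
  proof -
    have "finite S" using that finite_subset by blast
    then show ?thesis using that
    proof (induction S rule: finite_induct)
      case empty then show ?case using B by (simp add: TT_def)
    next
      case (insert a S)
      have ar: "a < r" using insert.prems by blast
      show ?case
      proof (intro allI impI)
        fix ch assume ch: "\<forall>i<r. ch i \<in> Ls i"
        define R where "R = (\<Sum>i\<in>{..<r} - {a}. TT (insert a S) ch i)"
        have e1: "(\<Sum>i<r. TT (insert a S) ch i) = avg a + R"
          unfolding R_def using ar by (simp add: sum.remove TT_def)
        have e2: "(\<Sum>i<r. TT S (ch(a := l)) i) = V a l + R" for l
        proof -
          have "(\<Sum>i<r. TT S (ch(a := l)) i) = TT S (ch(a := l)) a + (\<Sum>i\<in>{..<r} - {a}. TT S (ch(a := l)) i)"
            using ar by (simp add: sum.remove)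
          also have "TT S (ch(a := l)) a = V a l" using insert.hyps(2) by (simp add: TT_def)
          also have "(\<Sum>i\<in>{..<r} - {a}. TT S (ch(a := l)) i) = R"
            unfolding R_def by (rule sum.cong) (auto simp: TT_def)
          finally show ?thesis .
        qed
        have fa: "finite (Ls a)" and la: "\<forall>l\<in>Ls a. 0 \<le> lam a l" and sa: "sum (lam a) (Ls a) = 1"
          using L[OF ar] by auto
        have "avg a + R = (\<Sum>l\<in>Ls a. lam a l *\<^sub>R (V a l + R))"
          unfolding avg_def by (simp add: scaleR_add_right sum.distrib scaleR_sum_left[symmetric] sa)
        then have "norm (avg a + R) \<le> (\<Sum>l\<in>Ls a. norm (lam a l *\<^sub>R (V a l + R)))"
          by (simp only:) (rule norm_sum)
        also have "\<dots> \<le> (\<Sum>l\<in>Ls a. lam a l * B)"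
        proof (rule sum_mono)
          fix l assume l: "l \<in> Ls a"
          have chl: "\<forall>i<r. (ch(a := l)) i \<in> Ls i" using ch l by auto
          have Ssub: "S \<subseteq> {..<r}" using insert.prems by blast
          have ih: "\<forall>ch. (\<forall>i<r. ch i \<in> Ls i) \<longrightarrow> norm (\<Sum>i<r. TT S ch i) \<le> B" by (rule insert.IH[OF Ssub])
          have "norm (\<Sum>i<r. TT S (ch(a := l)) i) \<le> B" using ih chl by blast
          then have "norm (V a l + R) \<le> B" by (simp only: e2)
          then show "norm (lam a l *\<^sub>R (V a l + R)) \<le> lam a l * B"
            using la l by (simp add: mult_left_mono)
        qed
        also have "\<dots> = B" using sa by (simp add: sum_distrib_right[symmetric])
        finally show "norm (\<Sum>i<r. TT (insert a S) ch i) \<le> B" using e1 by simp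
      qed
    qed
  qed
  have "norm (\<Sum>i<r. TT {..<r} ch0 i) \<le> B" using claim[of "{..<r}"] ch0 by blast
  moreover have "(\<Sum>i<r. TT {..<r} ch0 i) = (\<Sum>i<r. avg i)" by (rule sum.cong) (auto simp: TT_def)
  ultimately show ?thesis unfolding avg_def by simp
qed

definition Wv :: "(nat \<Rightarrow> nat \<Rightarrow> 'a::real_normed_vector) \<Rightarrow> (nat \<Rightarrow> nat) \<Rightarrow> (nat \<Rightarrow> real) \<Rightarrow> nat \<Rightarrow> nat set \<Rightarrow> 'a" where
  "Wv x \<rho> \<sigma> r X = (\<Sum>i<r. \<sigma> i *\<^sub>R x (\<rho> i) (sorted_list_of_set X ! i))"

fun bseq :: "(nat \<Rightarrow> nat \<Rightarrow> nat set \<times> (nat \<Rightarrow> real)) \<Rightarrow> nat \<Rightarrow> nat \<Rightarrow> nat" where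
  "bseq pk c 0 = 0"
| "bseq pk c (Suc i) = Max (fst (pk i (bseq pk c i))) + c"

lemma infinite_tail: "infinite (Y::nat set) \<Longrightarrow> infinite (Y \<inter> {b..})"
proof
  assume "infinite Y" "finite (Y \<inter> {b..})"
  moreover have "Y \<subseteq> (Y \<inter> {b..}) \<union> {..<b}" by auto
  ultimately show False using finite_subset by blast
qed

lemma LB:
  fixes x :: "nat \<Rightarrow> nat \<Rightarrow> 'a::real_normed_vector" and e :: "nat \<Rightarrow> 'b::real_normed_vector"
    and \<delta> \<eta> :: real and ep :: "nat \<Rightarrow> real"
  assumes model: "\<forall>n (a::nat\<Rightarrow>real) (kk::nat\<Rightarrow>nat). (\<forall>i<n. -1 \<le> a i \<and> a i \<le> 1) \<longrightarrow>
           (0 < n \<longrightarrow> n \<le> kk 0) \<longrightarrow> (\<forall>i j. i < j \<and> j < n \<longrightarrow> kk i < kk j) \<longrightarrow>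
           \<bar>norm (\<Sum>i<n. a i *\<^sub>R x i (kk i)) - norm (\<Sum>i<n. a i *\<^sub>R e i)\<bar> < ep n"
    and wn: "\<And>j (g :: 'a \<Rightarrow> real). j < k \<Longrightarrow> bounded_linear g \<Longrightarrow> (\<lambda>n. g (x j n)) \<longlonglongrightarrow> 0"
    and Yinf: "infinite Y" and Ysub: "Y \<subseteq> {N0 + k..}" and kN0: "k \<le> N0"
    and stab: "\<And>X1 X2. X1 \<subseteq> Y \<Longrightarrow> X2 \<subseteq> Y \<Longrightarrow> finite X1 \<Longrightarrow> finite X2 \<Longrightarrow> card X1 = r \<Longrightarrow> card X2 = r \<Longrightarrow>
              \<bar>norm (Wv x \<rho> \<sigma> r X1) - norm (Wv x \<rho> \<sigma> r X2)\<bar> < \<eta>"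
    and T: "T \<subseteq> Y" "finite T" "card T = r"
    and rho: "\<forall>i<r. \<rho> i < k" and sig: "\<forall>i<r. \<sigma> i = 1 \<or> \<sigma> i = -1"
    and mono: "\<And>i i'. i < i' \<Longrightarrow> i' < r \<Longrightarrow> \<sigma> i = 1 \<Longrightarrow> \<sigma> i' = 1 \<Longrightarrow> \<rho> i < \<rho> i'"
    and dpos: "\<delta> > 0"
  shows "norm (\<Sum>j\<in>\<rho> ` {i. i<r \<and> \<sigma> i = 1}. e j) - ep N0 \<le> norm (Wv x \<rho> \<sigma> r T) + \<eta> + real r * \<delta>"
proof -
  define K where "K = {i. i<r \<and> \<sigma> i = 1}"
  define good where "good i b pr \<longleftrightarrow> finite (fst pr) \<and> fst pr \<noteq> {} \<and> fst pr \<subseteq> Y \<inter> {b..} \<and>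
      (\<forall>l\<in>fst pr. 0 \<le> snd pr l) \<and> sum (snd pr) (fst pr) = 1 \<and> (\<sigma> i = 1 \<longrightarrow> card (fst pr) = 1) \<and>
      (\<sigma> i \<noteq> 1 \<longrightarrow> norm (\<Sum>l\<in>fst pr. snd pr l *\<^sub>R x (\<rho> i) l) < \<delta>)" for i b pr
  have exgood: "\<exists>pr. good i b pr" if ir: "i < r" for i b
  proof (cases "\<sigma> i = 1")
    case True
    obtain l where l: "l \<in> Y \<inter> {b..}" using infinite_tail[OF Yinf, of b] infinite_imp_nonempty by blast
    have "good i b ({l}, \<lambda>_. 1)" unfolding good_def using l True by simp
    then show ?thesis by blast
  next
    case False
    have wnr: "\<And>g :: 'a \<Rightarrow> real. bounded_linear g \<Longrightarrow> (\<lambda>n. g (x (\<rho> i) n)) \<longlonglongrightarrow> 0"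
      using wn rho ir by blast
    have "\<exists>L lam. finite L \<and> L \<noteq> {} \<and> L \<subseteq> Y \<inter> {b..} \<and> (\<forall>l\<in>L. 0 \<le> lam l) \<and> sum lam L = 1 \<and>
            norm (\<Sum>l\<in>L. lam l *\<^sub>R x (\<rho> i) l) < \<delta>"
      by (rule mazur_idx[where y="x (\<rho> i)" and Y="Y \<inter> {b..}"]) (fact wnr | rule infinite_tail[OF Yinf] | rule dpos)+
    then obtain L lam where L: "finite L" "L \<noteq> {}" "L \<subseteq> Y \<inter> {b..}" "\<forall>l\<in>L. 0 \<le> lam l" "sum lam L = 1"
      "norm (\<Sum>l\<in>L. lam l *\<^sub>R x (\<rho> i) l) < \<delta>"
      by blast
    have "good i b (L, lam)" unfolding good_def using L False by simp
    then show ?thesis by blast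
  qed
  define pk where "pk i b = (SOME pr. good i b pr)" for i b
  have pkgood: "good i b (pk i b)" if "i < r" for i b
    unfolding pk_def using exgood[OF that] by (rule someI_ex)
  define bnd where "bnd = bseq pk (k + 1)"
  define Ls where "Ls i = fst (pk i (bnd i))" for i
  define lam where "lam i = snd (pk i (bnd i))" for i
  have G: "good i (bnd i) (pk i (bnd i))" if "i < r" for i using pkgood[OF that] .
  have Lsfin: "finite (Ls i)" and Lsne: "Ls i \<noteq> {}" and LsY: "Ls i \<subseteq> Y" and Lsb: "\<forall>l\<in>Ls i. bnd i \<le> l"
    and lamnn: "\<forall>l\<in>Ls i. 0 \<le> lam i l" and lamsum: "sum (lam i) (Ls i) = 1" if "i < r" for i
    using G[OF that] unfolding good_def Ls_def lam_def by auto
  have LsK: "card (Ls i) = 1" if "i < r" "\<sigma> i = 1" for i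
    using G[OF that(1)] that(2) unfolding good_def Ls_def by auto
  have LsA: "norm (\<Sum>l\<in>Ls i. lam i l *\<^sub>R x (\<rho> i) l) < \<delta>" if "i < r" "\<sigma> i \<noteq> 1" for i
    using G[OF that(1)] that(2) unfolding good_def Ls_def lam_def by auto
  have bndS: "bnd (Suc i) = Max (Ls i) + (k + 1)" for i unfolding bnd_def Ls_def by simp
  have bndstep: "bnd i \<le> bnd (Suc i)" if ir: "i < r" for i
  proof -
    obtain l where l: "l \<in> Ls i" using Lsne[OF ir] by blast
    have "l \<le> Max (Ls i)" using Max_ge[OF Lsfin[OF that] l] .
    then show ?thesis using Lsb[OF that] l bndS[of i] by fastforce
  qed
  have bndmono: "bnd a \<le> bnd b" if "a \<le> b" "b \<le> r" for a b
    using that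
  proof (induction b)
    case 0 then show ?case by simp
  next
    case (Suc b)
    show ?case
    proof (cases "a = Suc b")
      case True then show ?thesis by simp
    next
      case False
      then have "bnd a \<le> bnd b" using Suc by simp
      also have "\<dots> \<le> bnd (Suc b)" using bndstep Suc.prems by simp
      finally show ?thesis .
    qed
  qed
  have sep: "l + (k + 1) \<le> l'" if "i < i'" "i' < r" "l \<in> Ls i" "l' \<in> Ls i'" for i i' l l'
  proof -
    have ir: "i < r" using that by simp
    have "l \<le> Max (Ls i)" using Max_ge[OF Lsfin[OF ir] that(3)] .
    then have "l + (k + 1) \<le> bnd (Suc i)" using bndS[of i] by simp
    also have "\<dots> \<le> bnd i'" using bndmono that by simp
    also have "\<dots> \<le> l'" using Lsb[OF that(2)] that(4) by blast
    finally show ?thesis .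
  qed
  define B where "B = norm (Wv x \<rho> \<sigma> r T) + \<eta>"
  have Bch: "norm (\<Sum>i<r. \<sigma> i *\<^sub>R x (\<rho> i) (ch i)) \<le> B" if ch: "\<forall>i<r. ch i \<in> Ls i" for ch
  proof -
    have inc: "ch i < ch j" if ij: "i < j" "j < r" for i j
    proof -
      have "ch i \<in> Ls i" "ch j \<in> Ls j" using ch ij by auto
      then have "ch i + (k + 1) \<le> ch j" by (rule sep[OF ij])
      then show ?thesis by simp
    qed
    have sl: "sorted_list_of_set (ch ` {..<r}) = map ch [0..<r]" and cX: "card (ch ` {..<r}) = r"
      using sorted_image_upt[of r ch] inc by blast+
    have XY: "ch ` {..<r} \<subseteq> Y" using ch LsY by blast
    have "Wv x \<rho> \<sigma> r (ch ` {..<r}) = (\<Sum>i<r. \<sigma> i *\<^sub>R x (\<rho> i) (ch i))"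
      unfolding Wv_def sl by (rule sum.cong) auto
    moreover have "\<bar>norm (Wv x \<rho> \<sigma> r (ch ` {..<r})) - norm (Wv x \<rho> \<sigma> r T)\<bar> < \<eta>"
      using stab[OF XY T(1) _ T(2) cX T(3)] by simp
    ultimately have "norm (Wv x \<rho> \<sigma> r (ch ` {..<r})) \<le> norm (Wv x \<rho> \<sigma> r T) + \<eta>"
      and eqW: "Wv x \<rho> \<sigma> r (ch ` {..<r}) = (\<Sum>i<r. \<sigma> i *\<^sub>R x (\<rho> i) (ch i))"
      by (simp_all add: abs_less_iff)
    then show ?thesis unfolding B_def by simp
  qed
  define ch0 where "ch0 i = (SOME l. l \<in> Ls i)" for i
  have ch0: "\<forall>i<r. ch0 i \<in> Ls i" unfolding ch0_def using Lsne by (metis all_not_in_conv someI_ex)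
  have avgB: "norm (\<Sum>i<r. \<Sum>l\<in>Ls i. lam i l *\<^sub>R (\<sigma> i *\<^sub>R x (\<rho> i) l)) \<le> B"
    by (rule avg_bound[where V="\<lambda>i l. \<sigma> i *\<^sub>R x (\<rho> i) l", OF _ Bch ch0]) (use Lsfin lamnn lamsum in auto)
  define sel where "sel i = Max (Ls i)" for i
  have selK: "Ls i = {sel i}" if "i \<in> K" for i
  proof -
    have ir: "i < r" "\<sigma> i = 1" using that K_def by auto
    obtain l where "Ls i = {l}" using LsK[OF ir] card_1_singletonE by blast
    then show ?thesis unfolding sel_def by simp
  qed
  have selY: "sel i \<in> Y" if "i \<in> K" for i using selK[OF that] LsY that K_def by auto
  have innerK: "(\<Sum>l\<in>Ls i. lam i l *\<^sub>R (\<sigma> i *\<^sub>R x (\<rho> i) l)) = x (\<rho> i) (sel i)" if "i \<in> K" for i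
  proof -
    have ir: "i < r" "\<sigma> i = 1" using that K_def by auto
    have "lam i (sel i) = 1" using lamsum[OF ir(1)] selK[OF that] by simp
    then show ?thesis using selK[OF that] ir by simp
  qed
  have innerA: "norm (\<Sum>l\<in>Ls i. lam i l *\<^sub>R (\<sigma> i *\<^sub>R x (\<rho> i) l)) < \<delta>" if "i < r" "i \<notin> K" for i
  proof -
    have s: "\<sigma> i = -1" using that sig K_def by auto
    have "(\<Sum>l\<in>Ls i. lam i l *\<^sub>R (\<sigma> i *\<^sub>R x (\<rho> i) l)) = - (\<Sum>l\<in>Ls i. lam i l *\<^sub>R x (\<rho> i) l)"
      using s by (simp add: sum_negf)
    then show ?thesis using LsA[OF that(1)] s by simp
  qed
  define U where "U = (\<Sum>i\<in>K. x (\<rho> i) (sel i))"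
  define Rest where "Rest = (\<Sum>i\<in>{..<r} - K. \<Sum>l\<in>Ls i. lam i l *\<^sub>R (\<sigma> i *\<^sub>R x (\<rho> i) l))"
  have Ksub: "K \<subseteq> {..<r}" unfolding K_def by auto
  have split: "(\<Sum>i<r. \<Sum>l\<in>Ls i. lam i l *\<^sub>R (\<sigma> i *\<^sub>R x (\<rho> i) l)) = U + Rest"
  proof -
    have "(\<Sum>i<r. \<Sum>l\<in>Ls i. lam i l *\<^sub>R (\<sigma> i *\<^sub>R x (\<rho> i) l)) =
          (\<Sum>i\<in>K. \<Sum>l\<in>Ls i. lam i l *\<^sub>R (\<sigma> i *\<^sub>R x (\<rho> i) l)) + Rest"
      unfolding Rest_def using Ksub by (simp add: sum.subset_diff[of K "{..<r}"] add.commute)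
    also have "(\<Sum>i\<in>K. \<Sum>l\<in>Ls i. lam i l *\<^sub>R (\<sigma> i *\<^sub>R x (\<rho> i) l)) = U"
      unfolding U_def by (rule sum.cong[OF refl]) (erule innerK)
    finally show ?thesis .
  qed
  have Restb: "norm Rest \<le> real r * \<delta>"
  proof -
    have "norm Rest \<le> (\<Sum>i\<in>{..<r} - K. norm (\<Sum>l\<in>Ls i. lam i l *\<^sub>R (\<sigma> i *\<^sub>R x (\<rho> i) l)))"
      unfolding Rest_def by (rule norm_sum)
    also have "\<dots> \<le> (\<Sum>i\<in>{..<r} - K. \<delta>)" by (rule sum_mono) (use innerA in \<open>auto intro: less_imp_le\<close>)
    also have "\<dots> = card ({..<r} - K) * \<delta>" by simp
    also have "\<dots> \<le> real r * \<delta>" using dpos by (simp add: card_Diff_subset[OF _ Ksub] finite_subset[OF Ksub])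
    finally show ?thesis .
  qed
  have Ub: "norm U \<le> B + real r * \<delta>"
  proof -
    have "U = (U + Rest) - Rest" by simp
    then have "norm U \<le> norm (U + Rest) + norm Rest" by (metis norm_triangle_ineq4)
    then show ?thesis using avgB split Restb by simp
  qed
  have injK: "inj_on \<rho> K"
  proof (rule inj_onI)
    fix i i' assume a: "i \<in> K" "i' \<in> K" "\<rho> i = \<rho> i'"
    show "i = i'"
    proof (rule ccontr)
      assume "i \<noteq> i'"
      then consider "i < i'" | "i' < i" by linarith
      then show False using mono a K_def by cases fastforce+
    qed
  qed
  define s where "s j = sel (inv_into K \<rho> j)" for j
  have Ure: "U = (\<Sum>j\<in>\<rho> ` K. x j (s j))"
    unfolding U_def s_def by (simp add: sum.reindex[OF injK] inv_into_f_f[OF injK])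
  have FK: "\<rho> ` K \<subseteq> {..<N0}" using rho kN0 K_def by fastforce
  have s1: "\<forall>j\<in>\<rho> ` K. N0 + j \<le> s j"
  proof
    fix j assume j: "j \<in> \<rho> ` K"
    then obtain i where i: "i \<in> K" "j = \<rho> i" by blast
    have "s j = sel i" unfolding s_def using i injK by simp
    then have "s j \<in> Y" using selY[OF i(1)] by simp
    then have "N0 + k \<le> s j" using Ysub by auto
    moreover have "j < k" using i rho K_def by auto
    ultimately show "N0 + j \<le> s j" by simp
  qed
  have s2: "\<forall>j\<in>\<rho> ` K. \<forall>j'\<in>\<rho> ` K. j < j' \<longrightarrow> s j + (j' - j) \<le> s j'"
  proof (intro ballI impI)
    fix j j' assume j: "j \<in> \<rho> ` K" and j': "j' \<in> \<rho> ` K" and jj: "j < j'"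
    then obtain i i' where i: "i \<in> K" "j = \<rho> i" and i': "i' \<in> K" "j' = \<rho> i'" by blast
    have sj: "s j = sel i" "s j' = sel i'" unfolding s_def using i i' injK by simp_all
    have "i < i'"
    proof (rule ccontr)
      assume "\<not> i < i'"
      then consider "i = i'" | "i' < i" by linarith
      then show False using mono i i' jj K_def by cases fastforce+
    qed
    then have "sel i + (k + 1) \<le> sel i'" using sep[of i i' "sel i" "sel i'"] selK i i' K_def by auto
    moreover have "j' < k" using i' rho K_def by auto
    ultimately show "s j + (j' - j) \<le> s j'" using sj by simp
  qed
  have "\<bar>norm (\<Sum>j\<in>\<rho> ` K. x j (s j)) - norm (\<Sum>j\<in>\<rho> ` K. e j)\<bar> < ep N0"
    by (rule am_bound[OF model FK s1 s2])
  moreover have "norm (\<Sum>j\<in>\<rho> ` K. x j (s j)) \<le> norm (Wv x \<rho> \<sigma> r T) + \<eta> + real r * \<delta>"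
    using Ub Ure unfolding B_def by simp
  ultimately show ?thesis unfolding K_def by (simp add: abs_less_iff)
qed

definition labs :: "nat \<Rightarrow> (nat \<times> (nat \<Rightarrow> nat) \<times> (nat \<Rightarrow> real)) set" where
  "labs k = (SIGMA r:{..2*k}. ({..<r} \<rightarrow>\<^sub>E {..<k}) \<times> ({..<r} \<rightarrow>\<^sub>E {-1, 1}))"

lemma finite_labs: "finite (labs k)"
  unfolding labs_def by (intro finite_SigmaI finite_cartesian_product finite_PiE) auto

lemma mono_plus:
  fixes y :: "nat \<Rightarrow> nat"
  assumes "\<And>m n. m < n \<Longrightarrow> y m < y n" "a \<le> b"
  shows "y a + (b - a) \<le> y b"
  using assms(2)
proof (induction b)
  case 0 then show ?case by simp
next
  case (Suc b)
  show ?case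
  proof (cases "a = Suc b")
    case True then show ?thesis by simp
  next
    case False
    then have "a \<le> b" using Suc.prems by simp
    then have "y a + (b - a) \<le> y b" by (rule Suc.IH)
    moreover have "y b < y (Suc b)" by (rule assms(1)) simp
    ultimately show ?thesis using \<open>a \<le> b\<close> by simp
  qed
qed

lemma pair_bounds:
  fixes x :: "nat \<Rightarrow> nat \<Rightarrow> 'a::real_normed_vector" and e :: "nat \<Rightarrow> 'b::real_normed_vector"
    and \<delta> \<eta> :: real and ep :: "nat \<Rightarrow> real"
  assumes model: "\<forall>n (a::nat\<Rightarrow>real) (kk::nat\<Rightarrow>nat). (\<forall>i<n. -1 \<le> a i \<and> a i \<le> 1) \<longrightarrow>
           (0 < n \<longrightarrow> n \<le> kk 0) \<longrightarrow> (\<forall>i j. i < j \<and> j < n \<longrightarrow> kk i < kk j) \<longrightarrow>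
           \<bar>norm (\<Sum>i<n. a i *\<^sub>R x i (kk i)) - norm (\<Sum>i<n. a i *\<^sub>R e i)\<bar> < ep n"
    and wn: "\<And>j (g :: 'a \<Rightarrow> real). j < k \<Longrightarrow> bounded_linear g \<Longrightarrow> (\<lambda>n. g (x j n)) \<longlonglongrightarrow> 0"
    and Yinf: "infinite Y" and Ysub: "Y \<subseteq> {N0 + k..}" and kN0: "k \<le> N0" and kpos: "0 < k"
    and stab: "\<And>r \<rho> \<sigma> X1 X2. (r, \<rho>, \<sigma>) \<in> labs k \<Longrightarrow> X1 \<subseteq> Y \<Longrightarrow> X2 \<subseteq> Y \<Longrightarrow> finite X1 \<Longrightarrow> finite X2 \<Longrightarrow>
              card X1 = r \<Longrightarrow> card X2 = r \<Longrightarrow> \<bar>norm (Wv x \<rho> \<sigma> r X1) - norm (Wv x \<rho> \<sigma> r X2)\<bar> < \<eta>"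
    and M: "M \<in> ksets k" and N: "N \<in> ksets k" and dpos: "\<delta> > 0" and eppos: "ep N0 \<ge> 0" and etapos: "\<eta> \<ge> 0"
  shows "norm ((\<Sum>j<k. x j (enumerate Y (k * (sorted_list_of_set M ! j) + j))) -
               (\<Sum>j<k. x j (enumerate Y (k * (sorted_list_of_set N ! j) + j)))) \<le> 2 * dk e k M N + 2 * ep N0"
    and "dk e k M N - ep N0 \<le> norm ((\<Sum>j<k. x j (enumerate Y (k * (sorted_list_of_set M ! j) + j))) -
               (\<Sum>j<k. x j (enumerate Y (k * (sorted_list_of_set N ! j) + j)))) + \<eta> + real (2 * k) * \<delta>"
proof -
  define y where "y = enumerate Y"
  have ymono: "y a < y b" if "a < b" for a b unfolding y_def using enumerate_mono[OF that Yinf] .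
  have ymonole: "y a \<le> y b \<longleftrightarrow> a \<le> b" for a b unfolding y_def using Yinf by simp
  have yinj: "inj y" unfolding y_def by (rule inj_enumerate[OF Yinf])
  have yY: "y a \<in> Y" for a unfolding y_def by (rule enumerate_in_set[OF Yinf])
  define m where "m j = sorted_list_of_set M ! j" for j
  define n where "n j = sorted_list_of_set N ! j" for j
  have Mfin: "finite M" "card M = k" using M unfolding ksets_def by auto
  have Nfin: "finite N" "card N = k" using N unfolding ksets_def by auto
  have mless: "m j < m j'" if "j < j'" "j' < k" for j j' unfolding m_def using sl_less[OF Mfin(1)] that Mfin(2) by simp
  have nless: "n j < n j'" if "j < j'" "j' < k" for j j' unfolding n_def using sl_less[OF Nfin(1)] that Nfin(2) by simp
  define cu where "cu j = y (k * m j + j)" for j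
  define cv where "cv j = y (k * n j + j)" for j
  define F where "F = {j. j < k \<and> m j \<noteq> n j}"
  have Fk: "F \<subseteq> {..<k}" unfolding F_def by auto
  have finF: "finite F" using Fk finite_subset by blast
  have dkF: "dk e k M N = norm (\<Sum>j\<in>F. e j)" unfolding dk_def F_def m_def n_def by simp
  define fM where "fM = (\<Sum>j<k. x j (enumerate Y (k * (sorted_list_of_set M ! j) + j)))"
  define fN where "fN = (\<Sum>j<k. x j (enumerate Y (k * (sorted_list_of_set N ! j) + j)))"
  have diff: "fM - fN = (\<Sum>j\<in>F. x j (cu j)) - (\<Sum>j\<in>F. x j (cv j))"
  proof -
    have "fM - fN = (\<Sum>j<k. x j (cu j) - x j (cv j))"
      unfolding fM_def fN_def cu_def cv_def y_def m_def n_def by (simp add: sum_subtractf)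
    also have "\<dots> = (\<Sum>j\<in>F. x j (cu j) - x j (cv j))"
      by (rule sum.mono_neutral_cong_right) (use Fk in \<open>auto simp: F_def cu_def cv_def\<close>)
    also have "\<dots> = (\<Sum>j\<in>F. x j (cu j)) - (\<Sum>j\<in>F. x j (cv j))" by (simp add: sum_subtractf)
    finally show ?thesis .
  qed
  have FN0: "F \<subseteq> {..<N0}" using Fk kN0 by auto
  have cuY: "N0 + j \<le> cu j" if "j \<in> F" for j
  proof -
    have "cu j \<in> Y" unfolding cu_def by (rule yY)
    then show ?thesis using Ysub that Fk by fastforce
  qed
  have cvY: "N0 + j \<le> cv j" if "j \<in> F" for j
  proof -
    have "cv j \<in> Y" unfolding cv_def by (rule yY)
    then show ?thesis using Ysub that Fk by fastforce
  qed
  have cusp: "cu j + (j' - j) \<le> cu j'" if "j < j'" "j' < k" for j j'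
  proof -
    have "m j < m j'" by (rule mless[OF that])
    then have "k * m j + j \<le> k * m j' + j'" using that by (simp add: add_mono)
    moreover have "k * m j + j + (j' - j) \<le> k * m j' + j'"
    proof -
      have "k * m j \<le> k * m j'" using \<open>m j < m j'\<close> by simp
      then show ?thesis using that by simp
    qed
    ultimately have "y (k * m j + j) + ((k * m j' + j') - (k * m j + j)) \<le> y (k * m j' + j')"
      using mono_plus[of y] ymono by blast
    moreover have "j' - j \<le> (k * m j' + j') - (k * m j + j)" using \<open>k * m j + j + (j' - j) \<le> k * m j' + j'\<close> by simp
    ultimately show ?thesis unfolding cu_def by simp
  qed
  have cvsp: "cv j + (j' - j) \<le> cv j'" if "j < j'" "j' < k" for j j'
  proof -
    have "n j < n j'" by (rule nless[OF that])
    then have "k * n j + j \<le> k * n j' + j'" using that by (simp add: add_mono)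
    moreover have "k * n j + j + (j' - j) \<le> k * n j' + j'"
    proof -
      have "k * n j \<le> k * n j'" using \<open>n j < n j'\<close> by simp
      then show ?thesis using that by simp
    qed
    ultimately have "y (k * n j + j) + ((k * n j' + j') - (k * n j + j)) \<le> y (k * n j' + j')"
      using mono_plus[of y] ymono by blast
    moreover have "j' - j \<le> (k * n j' + j') - (k * n j + j)" using \<open>k * n j + j + (j' - j) \<le> k * n j' + j'\<close> by simp
    ultimately show ?thesis unfolding cv_def by simp
  qed
  have amu: "\<bar>norm (\<Sum>j\<in>F. x j (cu j)) - norm (\<Sum>j\<in>F. e j)\<bar> < ep N0"
    by (rule am_bound[OF model FN0]) (use cuY cusp Fk in auto)
  have amv: "\<bar>norm (\<Sum>j\<in>F. x j (cv j)) - norm (\<Sum>j\<in>F. e j)\<bar> < ep N0"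
    by (rule am_bound[OF model FN0]) (use cvY cvsp Fk in auto)
  have "norm (fM - fN) \<le> norm (\<Sum>j\<in>F. x j (cu j)) + norm (\<Sum>j\<in>F. x j (cv j))"
    unfolding diff by (rule norm_triangle_ineq4)
  then show "norm (fM - fN) \<le> 2 * dk e k M N + 2 * ep N0"
    unfolding fM_def fN_def dkF using amu amv by (simp add: abs_less_iff)
  show "dk e k M N - ep N0 \<le> norm (fM - fN) + \<eta> + real (2 * k) * \<delta>"
  proof (cases "F = {}")
    case True
    have "dk e k M N = 0" unfolding dkF True by simp
    moreover have "0 \<le> real (2 * k) * \<delta>" using dpos by simp
    ultimately show ?thesis using eppos etapos norm_ge_zero[of "fM - fN"] by linarith
  next
    case False
    define T where "T = cu ` F \<union> cv ` F"
    define r where "r = card T"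
    define sT where "sT = sorted_list_of_set T"
    define row where "row c = (inv y c) mod k" for c
    define sg where "sg c = (if c \<in> cu ` F then 1 else -1::real)" for c
    define \<rho> where "\<rho> = restrict (\<lambda>i. row (sT ! i)) {..<r}"
    define \<sigma> where "\<sigma> = restrict (\<lambda>i. sg (sT ! i)) {..<r}"
    have finT: "finite T" unfolding T_def using finF by simp
    have rowcu: "row (cu j) = j" if "j < k" for j
      unfolding row_def cu_def using inv_f_f[OF yinj] that by simp
    have rowcv: "row (cv j) = j" if "j < k" for j
      unfolding row_def cv_def using inv_f_f[OF yinj] that by simp
    have cuinj: "inj_on cu F"
    proof (rule inj_onI)
      fix j j' assume "j \<in> F" "j' \<in> F" "cu j = cu j'"
      then show "j = j'" using rowcu Fk by (metis lessThan_iff subsetD)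
    qed
    have cvinj: "inj_on cv F"
    proof (rule inj_onI)
      fix j j' assume "j \<in> F" "j' \<in> F" "cv j = cv j'"
      then show "j = j'" using rowcv Fk by (metis lessThan_iff subsetD)
    qed
    have disj: "cu ` F \<inter> cv ` F = {}"
    proof (rule ccontr)
      assume "cu ` F \<inter> cv ` F \<noteq> {}"
      then obtain j j' where jj: "j \<in> F" "j' \<in> F" "cu j = cv j'" by blast
      then have "j = j'" using rowcu rowcv Fk by (metis lessThan_iff subsetD)
      then have "k * m j + j = k * n j + j" using jj yinj unfolding cu_def cv_def by (simp add: inj_eq)
      then have "m j = n j" using kpos by simp
      then show False using jj(1) F_def by simp
    qed
    have rle: "r \<le> 2 * k"
    proof -
      have "r \<le> card (cu ` F) + card (cv ` F)" unfolding r_def T_def by (rule card_Un_le)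
      also have "\<dots> \<le> card F + card F" by (intro add_mono card_image_le finF)
      also have "card F \<le> k" using card_mono[OF _ Fk] by simp
      finally show ?thesis by simp
    qed
    have rowlt: "row c < k" for c unfolding row_def using kpos by simp
    have lab: "(r, \<rho>, \<sigma>) \<in> labs k"
      unfolding labs_def \<rho>_def \<sigma>_def using rle rowlt by (auto simp: restrict_PiE_iff sg_def)
    have dT: "distinct sT" "set sT = T" "length sT = r"
      unfolding sT_def r_def using finT by simp_all
    have Wvd: "Wv x \<rho> \<sigma> r T = fM - fN"
    proof -
      define g where "g c = sg c *\<^sub>R x (row c) c" for c
      have "Wv x \<rho> \<sigma> r T = (\<Sum>i<r. g (sT ! i))"
        unfolding Wv_def g_def \<rho>_def \<sigma>_def sT_def[symmetric] by (rule sum.cong) auto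
      also have "\<dots> = (\<Sum>c\<in>T. g c)"
        by (rule sum.reindex_bij_betw[OF bij_betw_nth[OF dT(1)]]) (simp_all add: dT)
      also have "\<dots> = (\<Sum>c\<in>cu ` F. g c) + (\<Sum>c\<in>cv ` F. g c)"
        unfolding T_def by (rule sum.union_disjoint) (simp_all add: finF disj)
      also have "(\<Sum>c\<in>cu ` F. g c) = (\<Sum>j\<in>F. x j (cu j))"
        by (simp add: sum.reindex[OF cuinj] g_def sg_def rowcu) (rule sum.cong, use Fk rowcu in auto)
      also have "(\<Sum>c\<in>cv ` F. g c) = - (\<Sum>j\<in>F. x j (cv j))"
      proof -
        have "(\<Sum>c\<in>cv ` F. g c) = (\<Sum>j\<in>F. g (cv j))" by (simp add: sum.reindex[OF cvinj])
        also have "\<dots> = (\<Sum>j\<in>F. - x j (cv j))"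
        proof (rule sum.cong[OF refl])
          fix j assume j: "j \<in> F"
          have "cv j \<notin> cu ` F" using disj j by blast
          then show "g (cv j) = - x j (cv j)" unfolding g_def sg_def using rowcv j Fk by auto
        qed
        finally show ?thesis by (simp add: sum_negf)
      qed
      finally show ?thesis using diff by simp
    qed
    define K where "K = {i. i < r \<and> \<sigma> i = 1}"
    have sgK: "sT ! i \<in> cu ` F" if "i \<in> K" for i
    proof -
      have "i < r" "sg (sT ! i) = 1" using that unfolding K_def \<sigma>_def by auto
      then show ?thesis unfolding sg_def by (auto split: if_splits)
    qed
    have rhoK: "\<rho> ` K = F"
    proof
      show "\<rho> ` K \<subseteq> F"
      proof
        fix j assume "j \<in> \<rho> ` K"
        then obtain i where i: "i \<in> K" "j = \<rho> i" by blast
        obtain j0 where j0: "j0 \<in> F" "sT ! i = cu j0" using sgK[OF i(1)] by blast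
        have "\<rho> i = row (sT ! i)" using i(1) unfolding \<rho>_def K_def by simp
        then have "\<rho> i = j0" using j0 rowcu Fk by auto
        then show "j \<in> F" using i j0 by simp
      qed
    next
      show "F \<subseteq> \<rho> ` K"
      proof
        fix j assume j: "j \<in> F"
        have "cu j \<in> set sT" using dT(2) j unfolding T_def by simp
        then obtain i where i: "i < r" "sT ! i = cu j" using dT(3) by (auto simp: in_set_conv_nth)
        have "\<sigma> i = 1" using i j unfolding \<sigma>_def sg_def by auto
        then have "i \<in> K" using i K_def by simp
        moreover have "\<rho> i = j" using i j rowcu Fk unfolding \<rho>_def by auto
        ultimately show "j \<in> \<rho> ` K" by force
      qed
    qed
    have mono: "\<rho> i < \<rho> i'" if ii: "i < i'" "i' < r" "\<sigma> i = 1" "\<sigma> i' = 1" for i i'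
    proof -
      have iK: "i \<in> K" "i' \<in> K" using ii K_def by auto
      obtain j where j: "j \<in> F" "sT ! i = cu j" using sgK[OF iK(1)] by blast
      obtain j' where j': "j' \<in> F" "sT ! i' = cu j'" using sgK[OF iK(2)] by blast
      have "\<rho> i = j" "\<rho> i' = j'" using j j' ii rowcu Fk unfolding \<rho>_def by auto
      have "sT ! i < sT ! i'" unfolding sT_def using sl_less[OF finT] ii r_def by simp
      then have lt: "cu j < cu j'" using j j' by simp
      have "j < j'"
      proof (rule ccontr)
        assume "\<not> j < j'"
        then have "j' \<le> j" by simp
        have "m j' \<le> m j"
        proof (cases "j' = j")
          case False then show ?thesis using mless[of j' j] \<open>j' \<le> j\<close> j Fk by fastforce
        qed simp
        then have "k * m j' + j' \<le> k * m j + j" using \<open>j' \<le> j\<close> by (simp add: add_mono)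
        then have "cu j' \<le> cu j" unfolding cu_def using ymonole by simp
        then show False using lt by simp
      qed
      then show ?thesis using \<open>\<rho> i = j\<close> \<open>\<rho> i' = j'\<close> by simp
    qed
    have rho: "\<forall>i<r. \<rho> i < k" unfolding \<rho>_def using rowlt by simp
    have sig: "\<forall>i<r. \<sigma> i = 1 \<or> \<sigma> i = -1" unfolding \<sigma>_def sg_def by simp
    have TY: "T \<subseteq> Y" unfolding T_def cu_def cv_def using yY by auto
    have "norm (\<Sum>j\<in>\<rho> ` {i. i<r \<and> \<sigma> i = 1}. e j) - ep N0 \<le> norm (Wv x \<rho> \<sigma> r T) + \<eta> + real r * \<delta>"
      by (rule LB[OF model wn Yinf Ysub kN0 stab[OF lab] TY finT r_def[symmetric] rho sig mono dpos])
    then have "dk e k M N - ep N0 \<le> norm (fM - fN) + \<eta> + real r * \<delta>"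
      using rhoK Wvd dkF unfolding K_def by simp
    moreover have "real r * \<delta> \<le> real (2 * k) * \<delta>" using rle dpos by (intro mult_right_mono) auto
    ultimately show ?thesis by simp
  qed
qed

theorem theorem3p9:
  fixes x :: "nat \<Rightarrow> nat \<Rightarrow> 'a::banach"
    and e :: "nat \<Rightarrow> 'b::banach"
    and k :: nat and \<epsilon> :: real
  assumes "normalized_weakly_null_array x"
    and "asymptotic_model e x"
    and "\<epsilon> > 0"
  shows "\<exists>s > 0. \<exists>f :: nat set \<Rightarrow> 'a. \<forall>M \<in> ksets k. \<forall>N \<in> ksets k.
           s * dk e k M N \<le> norm (f M - f N) \<and>
           norm (f M - f N) \<le> s * (2 + \<epsilon>) * dk e k M N"
proof -
  have norm1: "\<And>i j. norm (x i j) = 1" using assms(1) unfolding normalized_weakly_null_array_def by blast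
  have wn: "\<And>j (g :: 'a \<Rightarrow> real). j < k \<Longrightarrow> bounded_linear g \<Longrightarrow> (\<lambda>n. g (x j n)) \<longlonglongrightarrow> 0"
    using assms(1) unfolding normalized_weakly_null_array_def weakly_null_def by blast
  have basic: "basic_sequence e" using assms(2) unfolding asymptotic_model_def by blast
  obtain ep :: "nat \<Rightarrow> real" where ep01: "\<forall>n. 0 < ep n \<and> ep n < 1" and eplim: "ep \<longlonglongrightarrow> 0"
    and model: "\<forall>n (a::nat\<Rightarrow>real) (kk::nat\<Rightarrow>nat). (\<forall>i<n. -1 \<le> a i \<and> a i \<le> 1) \<longrightarrow>
           (0 < n \<longrightarrow> n \<le> kk 0) \<longrightarrow> (\<forall>i j. i < j \<and> j < n \<longrightarrow> kk i < kk j) \<longrightarrow>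
           \<bar>norm (\<Sum>i<n. a i *\<^sub>R x i (kk i)) - norm (\<Sum>i<n. a i *\<^sub>R e i)\<bar> < ep n"
    using assms(2) unfolding asymptotic_model_def by blast
  show ?thesis
  proof (cases "k = 0")
    case True
    have dk0: "dk e k M N = 0" for M N unfolding dk_def True by simp
    have "\<exists>f :: nat set \<Rightarrow> 'a. \<forall>M \<in> ksets k. \<forall>N \<in> ksets k. 1 * dk e k M N \<le> norm (f M - f N) \<and>
           norm (f M - f N) \<le> 1 * (2 + \<epsilon>) * dk e k M N"
      by (rule exI[of _ "\<lambda>_. (0::'a)"]) (simp add: dk0)
    moreover have "(0::real) < 1" by simp
    ultimately show ?thesis by blast
  next
    case False
    then have kpos: "0 < k" by simp
    define Fs where "Fs = {F. F \<subseteq> {..<k} \<and> F \<noteq> {}}"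
    have finFs: "finite Fs" unfolding Fs_def by (rule finite_subset[of _ "Pow {..<k}"]) auto
    have neFs: "Fs \<noteq> {}" unfolding Fs_def using kpos by (auto intro!: exI[of _ "{0}"])
    define \<delta>0 where "\<delta>0 = Min ((\<lambda>F. norm (\<Sum>j\<in>F. e j)) ` Fs)"
    have d0le: "\<delta>0 \<le> norm (\<Sum>j\<in>F. e j)" if "F \<in> Fs" for F
      unfolding \<delta>0_def using finFs that by (intro Min_le) auto
    have d0pos: "\<delta>0 > 0"
    proof -
      have "\<forall>v \<in> (\<lambda>F. norm (\<Sum>j\<in>F. e j)) ` Fs. 0 < v"
      proof
        fix v assume "v \<in> (\<lambda>F. norm (\<Sum>j\<in>F. e j)) ` Fs"
        then obtain F where F: "F \<in> Fs" "v = norm (\<Sum>j\<in>F. e j)" by blast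
        have "finite F" "F \<noteq> {}" using F(1) unfolding Fs_def by (auto intro: finite_subset)
        then have "(\<Sum>j\<in>F. e j) \<noteq> 0" by (rule basic_sum_nonzero[OF basic])
        then show "0 < v" using F(2) by simp
      qed
      then show ?thesis unfolding \<delta>0_def using finFs neFs by (subst Min_gr_iff) auto
    qed
    define q where "q = \<epsilon> / (8 + 3 * \<epsilon>)"
    have qpos: "q > 0" unfolding q_def using assms(3) by simp
    have q3: "3 * q < 1" unfolding q_def using assms(3) by (simp add: field_simps)
    have qid: "(1 - 3 * q) * (2 + \<epsilon>) = 2 + 2 * q" unfolding q_def using assms(3) by (simp add: field_simps)
    define \<tau> where "\<tau> = q * \<delta>0"
    have tpos: "\<tau> > 0" unfolding \<tau>_def using qpos d0pos by simp
    obtain N1 where N1: "\<And>n. n \<ge> N1 \<Longrightarrow> ep n < \<tau>"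
    proof -
      have "eventually (\<lambda>n. dist (ep n) 0 < \<tau>) sequentially" using eplim tpos by (rule tendstoD)
      then obtain N1 where "\<And>n. n \<ge> N1 \<Longrightarrow> dist (ep n) 0 < \<tau>" unfolding eventually_sequentially by blast
      then have "\<And>n. n \<ge> N1 \<Longrightarrow> ep n < \<tau>" by (simp add: dist_real_def abs_less_iff)
      then show ?thesis by (rule that)
    qed
    define N0 where "N0 = max k N1"
    have kN0: "k \<le> N0" unfolding N0_def by simp
    have epN0: "ep N0 < \<tau>" "0 \<le> ep N0" using N1[of N0] ep01 unfolding N0_def by (auto intro: less_imp_le)
    define \<eta> where "\<eta> = \<tau>"
    define \<delta> where "\<delta> = \<tau> / real (2 * k)"
    have dpos: "\<delta> > 0" unfolding \<delta>_def using tpos kpos by simp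
    have d2k: "real (2 * k) * \<delta> = \<tau>" unfolding \<delta>_def using kpos by simp
    define Z where "Z = {N0 + k..}"
    have Zinf: "infinite Z" unfolding Z_def by (simp add: infinite_nat_iff_unbounded_le) (meson le_add2 le_trans nat_le_linear)
    define col where "col l X = nat \<lfloor>norm (Wv x (fst (snd l)) (snd (snd l)) (fst l) X) / \<eta>\<rfloor>"
      for l :: "nat \<times> (nat \<Rightarrow> nat) \<times> (nat \<Rightarrow> real)" and X
    define bd where "bd = nat \<lfloor>real (2 * k) / \<eta>\<rfloor> + 1"
    have Wvle: "norm (Wv x \<rho> \<sigma> r X) \<le> real r" if "(r, \<rho>, \<sigma>) \<in> labs k" for r \<rho> \<sigma> X
    proof -
      have sg: "\<forall>i<r. \<sigma> i = 1 \<or> \<sigma> i = -1" using that unfolding labs_def by (auto simp: PiE_iff)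
      have "norm (Wv x \<rho> \<sigma> r X) \<le> (\<Sum>i<r. norm (\<sigma> i *\<^sub>R x (\<rho> i) (sorted_list_of_set X ! i)))"
        unfolding Wv_def by (rule norm_sum)
      also have "\<dots> = (\<Sum>i<r. 1)" by (rule sum.cong) (use sg norm1 in auto)
      finally show ?thesis by simp
    qed
    have colb: "\<forall>l\<in>labs k. \<forall>X. X \<subseteq> Z \<and> finite X \<and> card X = fst l \<longrightarrow> col l X < bd"
    proof (intro ballI allI impI)
      fix l X assume l: "l \<in> labs k"
      obtain r \<rho> \<sigma> where lr: "l = (r, \<rho>, \<sigma>)" by (cases l) auto
      have rk: "r \<le> 2 * k" using l lr unfolding labs_def by auto
      have "norm (Wv x \<rho> \<sigma> r X) \<le> real (2 * k)" using Wvle[of r \<rho> \<sigma> X] l lr rk by simp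
      then have "norm (Wv x \<rho> \<sigma> r X) / \<eta> \<le> real (2 * k) / \<eta>"
        using tpos \<eta>_def by (simp add: divide_right_mono)
      then have "\<lfloor>norm (Wv x \<rho> \<sigma> r X) / \<eta>\<rfloor> \<le> \<lfloor>real (2 * k) / \<eta>\<rfloor>" by (rule floor_mono)
      then show "col l X < bd" unfolding col_def bd_def lr by simp
    qed
    have "\<exists>Y\<subseteq>Z. infinite Y \<and> (\<forall>l\<in>labs k. \<exists>c. \<forall>X. X \<subseteq> Y \<and> finite X \<and> card X = fst l \<longrightarrow> col l X = c)"
      by (rule ramsey_multi[OF finite_labs Zinf colb])
    then obtain Y where Y0: "Y \<subseteq> Z \<and> infinite Y \<and> (\<forall>l\<in>labs k. \<exists>c. \<forall>X. X \<subseteq> Y \<and> finite X \<and> card X = fst l \<longrightarrow> col l X = c)"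
      by (elim exE)
    note YZ = conjunct1[OF Y0] and Yinf = conjunct1[OF conjunct2[OF Y0]] and Ystab = conjunct2[OF conjunct2[OF Y0]]
    have stab: "\<bar>norm (Wv x \<rho> \<sigma> r X1) - norm (Wv x \<rho> \<sigma> r X2)\<bar> < \<eta>"
      if "(r, \<rho>, \<sigma>) \<in> labs k" "X1 \<subseteq> Y" "X2 \<subseteq> Y" "finite X1" "finite X2" "card X1 = r" "card X2 = r"
      for r \<rho> \<sigma> X1 X2
    proof -
      have "\<exists>c. \<forall>X. X \<subseteq> Y \<and> finite X \<and> card X = fst (r, \<rho>, \<sigma>) \<longrightarrow> col (r, \<rho>, \<sigma>) X = c"
        using Ystab that(1) by (rule bspec)
      then obtain c where c: "\<forall>X. X \<subseteq> Y \<and> finite X \<and> card X = r \<longrightarrow> col (r, \<rho>, \<sigma>) X = c"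
        by auto
      have "col (r, \<rho>, \<sigma>) X1 = c" using c that(2,4,6) by blast
      moreover have "col (r, \<rho>, \<sigma>) X2 = c" using c that(3,5,7) by blast
      ultimately have "col (r, \<rho>, \<sigma>) X1 = col (r, \<rho>, \<sigma>) X2" by simp
      then show ?thesis unfolding col_def using tpos \<eta>_def by (intro floor_close) auto
    qed
    have Ysub: "Y \<subseteq> {N0 + k..}" using YZ Z_def by simp
    define f where "f M = (\<Sum>j<k. x j (enumerate Y (k * (sorted_list_of_set M ! j) + j)))" for M
    define s where "s = 1 - 3 * q"
    have spos: "s > 0" unfolding s_def using q3 by simp
    have "\<forall>M \<in> ksets k. \<forall>N \<in> ksets k. s * dk e k M N \<le> norm (f M - f N) \<and>
           norm (f M - f N) \<le> s * (2 + \<epsilon>) * dk e k M N"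
    proof (intro ballI)
      fix M N assume M: "M \<in> ksets k" and N: "N \<in> ksets k"
      have etann: "0 \<le> \<eta>" unfolding \<eta>_def using tpos by simp
      note PB = pair_bounds[where x=x and e=e and \<delta>=\<delta> and \<eta>=\<eta> and ep=ep and k=k and Y=Y,
          OF model wn Yinf Ysub kN0 kpos stab M N dpos epN0(2)]
      have up: "norm (f M - f N) \<le> 2 * dk e k M N + 2 * ep N0" unfolding f_def by (rule PB(1)) (use etann in auto)
      have lo: "dk e k M N - ep N0 \<le> norm (f M - f N) + \<eta> + real (2 * k) * \<delta>"
        unfolding f_def by (rule PB(2)) (use etann in auto)
      define F' where "F' = {j. j < k \<and> sorted_list_of_set M ! j \<noteq> sorted_list_of_set N ! j}"
      have dkF: "dk e k M N = norm (\<Sum>j\<in>F'. e j)" unfolding dk_def F'_def by simp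
      show "s * dk e k M N \<le> norm (f M - f N) \<and> norm (f M - f N) \<le> s * (2 + \<epsilon>) * dk e k M N"
      proof (cases "F' = {}")
        case True
        have "f M = f N" unfolding f_def by (rule sum.cong) (use True F'_def in auto)
        moreover have "dk e k M N = 0" using dkF True by simp
        ultimately show ?thesis by simp
      next
        case False
        then have "F' \<in> Fs" unfolding Fs_def F'_def by auto
        then have dge: "\<delta>0 \<le> dk e k M N" using d0le dkF by simp
        have qd: "\<tau> \<le> q * dk e k M N" unfolding \<tau>_def using dge qpos by (simp add: mult_left_mono)
        have "s * dk e k M N = dk e k M N - 3 * (q * dk e k M N)" unfolding s_def by (simp add: algebra_simps)
        also have "\<dots> \<le> dk e k M N - 3 * \<tau>" using qd by simp
        also have "\<dots> \<le> norm (f M - f N)"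
        proof -
          have "dk e k M N - ep N0 \<le> norm (f M - f N) + \<tau> + \<tau>" using lo unfolding d2k \<eta>_def .
          then show ?thesis using epN0(1) by linarith
        qed
        finally have L: "s * dk e k M N \<le> norm (f M - f N)" .
        have "norm (f M - f N) \<le> 2 * dk e k M N + 2 * \<tau>" using up epN0(1) by linarith
        also have "\<dots> \<le> 2 * dk e k M N + 2 * (q * dk e k M N)" using qd by simp
        also have "\<dots> = (2 + 2 * q) * dk e k M N" by (simp add: algebra_simps)
        also have "\<dots> = s * (2 + \<epsilon>) * dk e k M N" unfolding s_def qid ..
        finally show ?thesis using L by simp
      qed
    qed
    then show ?thesis using spos by blast
  qed
qed

end
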